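(* Let $F:\mathbb{R}^n\rightrightarrows\mathbb{R}^n$ be continuous with $F(x)$ nonempty, compact and convex for all $x$, and assume $\Sigma:\dot x\in F(x)$ is forward complete. Then for each $x\in\mathbb{R}^n$ and each continuous $\epsilon:\mathbb{R}^n\to\mathbb{R}_{>0}$ there exists $T>0$ such that for each $t\in(0,T]$ there exists $\delta>0$ such that for each $y\in R^b_\Sigma(t,x)\setminus\{x\}$, $$y+\delta\mathbb{B}\subset R^b_{\Sigma_\epsilon}(t,x),\qquad x+\delta\mathbb{B}\subset R^b_{\Sigma_\epsilon}(-t,y)=R^b_{\Sigma^-_\epsilon}(t,y).$$
   Context: $\mathbb{B}$ is the closed unit ball. Continuity of set-valued maps means upper and lower semicontinuity. Solutions of a differential inclusion $\dot x\in G(x)$ are locally absolutely continuous functions on an interval containing $0$ (possibly extending to negative times) satisfying $\dot\phi(t)\in G(\phi(t))$ a.e.; maximal solutions are non-extendable; $\mathcal{S}_{\Sigma'}(x)$ is the set of maximal solutions of $\Sigma'$ with $\phi(0)=x$. Forward complete: each maximal solution is defined on an interval unbounded to the right. $\Sigma_\epsilon$: $\dot x\in F(x)+\epsilon(x)\mathbb{B}$; $\Sigma^-$: $\dot x\in -F(x)$; $\Sigma^-_\epsilon$: $\dot x\in -F(x)+\epsilon(x)\mathbb{B}$. For $t\ge0$: $R^b_{\Sigma'}(t,x):=\{\phi(s):\phi\in\mathcal{S}_{\Sigma'}(x),\ s\in\mathrm{dom}\,\phi\cap[0,t],\ \nexists s'\in[0,t]\cap\mathrm{dom}\,\phi,\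 s'>s\}$; for $t\le0$: $R^b_{\Sigma'}(t,x):=\{\phi(s):\phi\in\mathcal{S}_{\Sigma'}(x),\ s\in\mathrm{dom}\,\phi\cap[t,0],\ \nexists s'\in[t,0]\cap\mathrm{dom}\,\phi,\ s'<s\}$. *)

theory Defs
  imports "HOL-Analysis.Analysis"
begin

definition usc_setmap :: "('a::topological_space \<Rightarrow> 'b::topological_space set) \<Rightarrow> bool" where
  "usc_setmap G \<longleftrightarrow> (\<forall>x U. open U \<and> G x \<subseteq> U \<longrightarrow> (\<forall>\<^sub>F y in nhds x. G y \<subseteq> U))"

definition lsc_setmap :: "('a::topological_space \<Rightarrow> 'b::topological_space set) \<Rightarrow> bool" where
  "lsc_setmap G \<longleftrightarrow> (\<forall>x U. open U \<and> G x \<inter> U \<noteq> {} \<longrightarrow> (\<forall>\<^sub>F y in nhds x. G y \<inter> U \<noteq> {}))"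

definition continuous_setmap :: "('a::topological_space \<Rightarrow> 'b::topological_space set) \<Rightarrow> bool" where
  "continuous_setmap G \<longleftrightarrow> usc_setmap G \<and> lsc_setmap G"

definition abs_cont_on :: "real \<Rightarrow> real \<Rightarrow> (real \<Rightarrow> 'a::real_normed_vector) \<Rightarrow> bool" where
  "abs_cont_on a b f \<longleftrightarrow>
     (\<forall>e>0. \<exists>d>0. \<forall>(n::nat) (l::nat \<Rightarrow> real) (r::nat \<Rightarrow> real).
        (\<forall>k<n. a \<le> l k \<and> l k \<le> r k \<and> r k \<le> b) \<and>
        (\<forall>i<n. \<forall>j<n. i \<noteq> j \<longrightarrow> {l i<..<r i} \<inter> {l j<..<r j} = {}) \<and>
        (\<Sum>k<n. r k - l k) < d
        \<longrightarrow> (\<Sum>k<n. norm (f (r k) - f (l k))) < e)"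

definition loc_abs_cont_on :: "real set \<Rightarrow> (real \<Rightarrow> 'a::real_normed_vector) \<Rightarrow> bool" where
  "loc_abs_cont_on I f \<longleftrightarrow> (\<forall>a b. {a..b} \<subseteq> I \<longrightarrow> abs_cont_on a b f)"

text \<open>Values of phi outside I are irrelevant.\<close>
definition is_solution :: "('a::euclidean_space \<Rightarrow> 'a set) \<Rightarrow> real set \<Rightarrow> (real \<Rightarrow> 'a) \<Rightarrow> bool" where
  "is_solution G I \<phi> \<longleftrightarrow> is_interval I \<and> 0 \<in> I \<and> loc_abs_cont_on I \<phi> \<and>
     (AE t in lebesgue. t \<in> I \<longrightarrow>
        (\<exists>v. (\<phi> has_vector_derivative v) (at t within I) \<and> v \<in> G (\<phi> t)))"

definition is_maximal_solution :: "('a::euclidean_space \<Rightarrow> 'a set) \<Rightarrow> real set \<Rightarrow> (real \<Rightarrow> 'a) \<Rightarrow> bool" where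
  "is_maximal_solution G I \<phi> \<longleftrightarrow> is_solution G I \<phi> \<and>
     \<not> (\<exists>J \<psi>. is_solution G J \<psi> \<and> I \<subset> J \<and> (\<forall>s\<in>I. \<psi> s = \<phi> s))"

definition max_sols :: "('a::euclidean_space \<Rightarrow> 'a set) \<Rightarrow> 'a \<Rightarrow> (real set \<times> (real \<Rightarrow> 'a)) set" where
  "max_sols G x = {(I, \<phi>). is_maximal_solution G I \<phi> \<and> \<phi> 0 = x}"

definition forward_complete :: "('a::euclidean_space \<Rightarrow> 'a set) \<Rightarrow> bool" where
  "forward_complete G \<longleftrightarrow> (\<forall>x. \<forall>(I, \<phi>) \<in> max_sols G x. \<not> bdd_above I)"

definition Rb :: "('a::euclidean_space \<Rightarrow> 'a set) \<Rightarrow> real \<Rightarrow> 'a \<Rightarrow> 'a set" where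
  "Rb G t x =
    (if 0 \<le> t then
       {\<phi> s | I \<phi> s. (I, \<phi>) \<in> max_sols G x \<and> s \<in> I \<inter> {0..t} \<and>
                      \<not> (\<exists>s'\<in>{0..t} \<inter> I. s' > s)}
     else
       {\<phi> s | I \<phi> s. (I, \<phi>) \<in> max_sols G x \<and> s \<in> I \<inter> {t..0} \<and>
                      \<not> (\<exists>s'\<in>{t..0} \<inter> I. s' < s)})"

definition inflate :: "('a::euclidean_space \<Rightarrow> 'a set) \<Rightarrow> ('a \<Rightarrow> real) \<Rightarrow> 'a \<Rightarrow> 'a set" where
  "inflate G eps x = {u + w | u w. u \<in> G x \<and> w \<in> cball 0 (eps x)}"

definition reverse :: "('a::euclidean_space \<Rightarrow> 'a set) \<Rightarrow> 'a \<Rightarrow> 'a set" where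
  "reverse G x = uminus ` G x"

end

theory Submission
  imports Defs
begin

lemma tagged_int_bounds:
  fixes p :: "(real \<times> real set) set"
  assumes p: "p tagged_division_of {a..b}" and xK: "(x,K) \<in> p"
  shows "K = {Inf K..Sup K}" "Inf K \<le> x" "x \<le> Sup K" "a \<le> Inf K" "Sup K \<le> b"

proof -
  obtain u v where K: "K = cbox u v" using tagged_division_ofD(4)[OF p xK] by blast
  have xin: "x \<in> K" using tagged_division_ofD(2)[OF p xK] .
  have sub: "K \<subseteq> {a..b}" using tagged_division_ofD(3)[OF p xK] .
  have uv: "u \<le> v" using xin K by auto
  have I: "Inf K = u" "Sup K = v" using uv K by auto
  show "K = {Inf K..Sup K}" using I K by auto
  show "Inf K \<le> x" "x \<le> Sup K" using I K xin by auto
  show "a \<le> Inf K" "Sup K \<le> b" using I K sub uv by auto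
qed

lemma mvt_ac_aux:
  fixes \<phi> :: "real \<Rightarrow> 'a::euclidean_space"
  assumes ab: "a \<le> b" and ac: "abs_cont_on a b \<phi>" and N: "negligible N" and M: "M \<ge> 0"
    and eta: "\<eta> > 0" and e: "e > 0"
    and good: "\<And>t. t \<in> {a..b} - N \<Longrightarrow>
       \<exists>\<rho>>0. \<forall>s\<in>{a..b}. \<bar>s - t\<bar> < \<rho> \<longrightarrow> norm (\<phi> s - \<phi> t) \<le> (M+\<eta>)*\<bar>s-t\<bar>"
  shows "norm (\<phi> b - \<phi> a) \<le> (M+\<eta>)*(b-a) + e"
proof -
  obtain d where d: "d > 0" and dAC: "\<And>(n::nat) (l::nat \<Rightarrow> real) (r::nat \<Rightarrow> real).
        (\<forall>k<n. a \<le> l k \<and> l k \<le> r k \<and> r k \<le> b) \<Longrightarrow>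
        (\<forall>i<n. \<forall>j<n. i \<noteq> j \<longrightarrow> {l i<..<r i} \<inter> {l j<..<r j} = {}) \<Longrightarrow>
        (\<Sum>k<n. r k - l k) < d
        \<Longrightarrow> (\<Sum>k<n. norm (\<phi> (r k) - \<phi> (l k))) < e"
    using ac e unfolding abs_cont_on_def by meson
  have Nl: "N \<in> sets lebesgue" using N negligible_iff_null_sets by blast
  obtain T where T: "open T" "N \<subseteq> T" "(T - N) \<in> lmeasurable" "emeasure lebesgue (T - N) < ennreal d"
    using sets_lebesgue_outer_open[OF Nl d] by blast
  have Tl: "T \<in> lmeasurable"
    using T(2,3) N by (metis negligible_imp_measurable fmeasurable_Diff_D)
  have mT: "measure lebesgue T < d"
  proof -
    have "measure lebesgue (T - N) < d" using T(3,4)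
      by (simp add: emeasure_eq_measure2 ennreal_less_iff)
    moreover have "measure lebesgue T = measure lebesgue (T - N)"
      using T N by (metis fmeasurable_Diff_D measurable_Diff_null_set
        measure_Diff_null_set negligible_iff_measure negligible_iff_null_sets)
    ultimately show ?thesis by simp
  qed
  define \<rho> where "\<rho> t = (SOME \<rho>. \<rho>>0 \<and> (\<forall>s\<in>{a..b}. \<bar>s - t\<bar> < \<rho> \<longrightarrow> norm (\<phi> s - \<phi> t) \<le> (M+\<eta>)*\<bar>s-t\<bar>))" for t
  have \<rho>: "\<rho> t > 0" "\<forall>s\<in>{a..b}. \<bar>s - t\<bar> < \<rho> t \<longrightarrow> norm (\<phi> s - \<phi> t) \<le> (M+\<eta>)*\<bar>s-t\<bar>"
    if "t \<in> {a..b} - N" for t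
    using someI_ex[OF good[OF that]] unfolding \<rho>_def by blast+
  define r where "r t = (SOME r. r > 0 \<and> ball t r \<subseteq> T)" for t
  have r: "r t > 0" "ball t (r t) \<subseteq> T" if "t \<in> T" for t
    using someI_ex[OF open_contains_ball_eq[OF T(1), THEN iffD1, rule_format, OF that]]
    unfolding r_def by blast+
  define \<gamma> where "\<gamma> t = (if t \<in> {a..b} - N then ball t (\<rho> t) else if t \<in> T then ball t (r t) else ball t 1)" for t
  have "gauge \<gamma>" unfolding gauge_def \<gamma>_def using \<rho>(1) r(1) by auto
  then obtain p where p: "p tagged_division_of {a..b}" "\<gamma> fine p"
    using fine_division_exists_real by blast
  have finp: "finite p" using p(1) by blast
  define G where "G = {(x,K)\<in>p. x \<notin> N}"
  define B where "B = {(x,K)\<in>p. x \<in> N}"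
  have GB: "p = G \<union> B" "G \<inter> B = {}" "finite G" "finite B"
    unfolding G_def B_def using finp by (auto intro: finite_subset[OF _ finp])
  let ?f = "\<lambda>(x,K). norm (\<phi> (Sup K) - \<phi> (Inf K))"
  have "\<phi> b - \<phi> a = (\<Sum>(x,K)\<in>p. \<phi> (Sup K) - \<phi> (Inf K))"
    using additive_tagged_division_1[OF ab p(1), of \<phi>] by simp
  then have "norm (\<phi> b - \<phi> a) \<le> sum ?f p"
    using norm_sum[of "\<lambda>xK. \<phi> (Sup (snd xK)) - \<phi> (Inf (snd xK))" p] by (simp add: split_def)
  also have "\<dots> = sum ?f G + sum ?f B" by (simp only: GB(1)) (rule sum.union_disjoint[OF GB(3,4,2)])
  also have "sum ?f G \<le> (\<Sum>(x,K)\<in>G. (M+\<eta>) * (Sup K - Inf K))"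
  proof (rule sum_mono, clarify)
    fix x K assume xK: "(x,K) \<in> G"
    then have xKp: "(x,K) \<in> p" and xN: "x \<notin> N" unfolding G_def by auto
    note bd = tagged_int_bounds[OF p(1) xKp]
    have xab: "x \<in> {a..b} - N" using bd xN by auto
    have Kg: "K \<subseteq> ball x (\<rho> x)" using fineD[OF p(2) xKp] xab unfolding \<gamma>_def by auto
    have SK: "Sup K \<in> K" "Inf K \<in> K" using bd by (metis atLeastAtMost_iff order.trans order_refl)+
    have "norm (\<phi> (Sup K) - \<phi> (Inf K)) \<le> norm (\<phi> (Sup K) - \<phi> x) + norm (\<phi> x - \<phi> (Inf K))"
      by (metis diff_add_cancel norm_triangle_ineq add_diff_eq)
    also have "\<dots> \<le> (M+\<eta>)*\<bar>Sup K - x\<bar> + (M+\<eta>)*\<bar>Inf K - x\<bar>"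
    proof (rule add_mono)
      show "norm (\<phi> (Sup K) - \<phi> x) \<le> (M+\<eta>)*\<bar>Sup K - x\<bar>"
        using \<rho>(2)[OF xab] SK Kg bd by (auto simp: dist_real_def abs_minus_commute subset_iff)
      have "norm (\<phi> (Inf K) - \<phi> x) \<le> (M+\<eta>)*\<bar>Inf K - x\<bar>"
        using \<rho>(2)[OF xab] SK Kg bd by (auto simp: dist_real_def abs_minus_commute subset_iff)
      then show "norm (\<phi> x - \<phi> (Inf K)) \<le> (M+\<eta>)*\<bar>Inf K - x\<bar>" by (simp add: norm_minus_commute)
    qed
    also have "\<dots> = (M+\<eta>) * (Sup K - Inf K)" using bd by (simp add: algebra_simps)
    finally show "norm (\<phi> (Sup K) - \<phi> (Inf K)) \<le> (M+\<eta>) * (Sup K - Inf K)" .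
  qed
  also have "(\<Sum>(x,K)\<in>G. (M+\<eta>) * (Sup K - Inf K)) \<le> (M+\<eta>)*(b-a)"
  proof -
    have "(\<Sum>(x,K)\<in>G. (Sup K - Inf K)) \<le> (\<Sum>(x,K)\<in>p. (Sup K - Inf K))"
    proof (rule sum_mono2)
      show "finite p" using finp .
      show "G \<subseteq> p" using GB by auto
      fix xK assume "xK \<in> p - G"
      then have "xK \<in> p" by auto
      then show "0 \<le> (case xK of (x,K) \<Rightarrow> Sup K - Inf K)"
        using tagged_int_bounds(2,3)[OF p(1)] by (cases xK) fastforce
    qed
    also have "\<dots> = b - a"
      using additive_tagged_division_1[OF ab p(1), of id] by simp
    finally have "(\<Sum>(x,K)\<in>G. (Sup K - Inf K)) \<le> b - a" .
    then show ?thesis using M eta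
      by (simp add: sum_distrib_left[symmetric] split_def mult_left_mono)
  qed
  also have "sum ?f B < e"
  proof -
    obtain h where h: "bij_betw h {..<card B} B"
      using ex_bij_betw_nat_finite GB(4) lessThan_atLeast0 by metis
    define l where "l k = Inf (snd (h k))" for k
    define rr where "rr k = Sup (snd (h k))" for k
    have hB: "h k \<in> B" if "k < card B" for k using h that by (auto simp: bij_betw_def)
    have hp: "h k \<in> p" if "k < card B" for k using hB[OF that] unfolding B_def by auto
    have c1: "\<forall>k<card B. a \<le> l k \<and> l k \<le> rr k \<and> rr k \<le> b"
    proof (intro allI impI)
      fix k assume k: "k < card B"
      obtain x K where xK: "h k = (x,K)" by fastforce
      show "a \<le> l k \<and> l k \<le> rr k \<and> rr k \<le> b"
        using tagged_int_bounds[OF p(1) hp[OF k, unfolded xK]] xK l_def rr_def by auto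
    qed
    have c2: "\<forall>i<card B. \<forall>j<card B. i \<noteq> j \<longrightarrow> {l i<..<rr i} \<inter> {l j<..<rr j} = {}"
    proof (intro allI impI)
      fix i j assume i: "i < card B" and j: "j < card B" and ij: "i \<noteq> j"
      obtain x K where xK: "h i = (x,K)" by fastforce
      obtain y L where yL: "h j = (y,L)" by fastforce
      have ne: "(x,K) \<noteq> (y,L)" using ij h i j xK yL by (metis bij_betw_iff_bijections lessThan_iff)
      have "interior K \<inter> interior L = {}"
        using tagged_division_ofD(5)[OF p(1) hp[OF i, unfolded xK] hp[OF j, unfolded yL] ne] .
      moreover have "interior K = {l i<..<rr i}"
        using tagged_int_bounds(1)[OF p(1) hp[OF i, unfolded xK]] xK l_def rr_def
        by (metis interior_atLeastAtMost_real snd_conv)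
      moreover have "interior L = {l j<..<rr j}"
        using tagged_int_bounds(1)[OF p(1) hp[OF j, unfolded yL]] yL l_def rr_def
        by (metis interior_atLeastAtMost_real snd_conv)
      ultimately show "{l i<..<rr i} \<inter> {l j<..<rr j} = {}" by simp
    qed
    have c3: "(\<Sum>k<card B. rr k - l k) < d"
    proof -
      have lmB: "snd xK \<in> lmeasurable" if "xK \<in> B" for xK
      proof -
        obtain x K where xK: "xK = (x,K)" by fastforce
        then have "(x,K) \<in> p" using that unfolding B_def by auto
        then have "K = {Inf K..Sup K}" using tagged_int_bounds(1)[OF p(1)] by blast
        then show ?thesis using xK by (metis lmeasurable_cbox cbox_interval snd_conv)
      qed
      have "(\<Sum>k<card B. rr k - l k) = (\<Sum>(x,K)\<in>B. Sup K - Inf K)"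
        using sum.reindex_bij_betw[OF h, of "\<lambda>(x,K). Sup K - Inf K"] unfolding l_def rr_def
        by (simp add: split_def)
      also have "\<dots> = (\<Sum>xK\<in>B. measure lebesgue (snd xK))"
      proof (rule sum.cong, simp, clarify)
        fix x K assume "(x,K) \<in> B"
        then have xKp: "(x,K) \<in> p" unfolding B_def by auto
        note bd = tagged_int_bounds[OF p(1) xKp]
        have "measure lebesgue K = Sup K - Inf K"
          using bd by (metis measure_lborel_Icc measure_completion order.trans sets_lborel atLeastAtMost_borel) 
        then show "Sup K - Inf K = measure lebesgue (snd (x,K))" by simp
      qed
      also have "\<dots> = measure lebesgue (\<Union>(snd ` B))"
      proof (rule measure_negligible_finite_Union_image[symmetric, OF GB(4)])
        show "snd xK \<in> lmeasurable" if "xK \<in> B" for xK using lmB that .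
        show "pairwise (\<lambda>xK yL. negligible (snd xK \<inter> snd yL)) B"
        unfolding pairwise_def
        proof (intro ballI impI)
          fix xK yL assume xK0: "xK \<in> B" and yL0: "yL \<in> B" and ne0: "xK \<noteq> yL"
          obtain x K where xKe: "xK = (x,K)" by fastforce
          obtain y L where yLe: "yL = (y,L)" by fastforce
          have xK: "(x,K) \<in> B" and yL: "(y,L) \<in> B" using xK0 yL0 xKe yLe by auto
          have xKp: "(x,K) \<in> p" and yLp: "(y,L) \<in> p" using xK yL unfolding B_def by auto
          have ne': "(x,K) \<noteq> (y,L)" using ne0 xKe yLe by auto
          have disj: "interior K \<inter> interior L = {}"
            using tagged_division_ofD(5)[OF p(1) xKp yLp ne'] .
          have K: "K = {Inf K..Sup K}" using tagged_int_bounds(1)[OF p(1) xKp] .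
          have L: "L = {Inf L..Sup L}" using tagged_int_bounds(1)[OF p(1) yLp] .
          have "K \<inter> L \<subseteq> {Inf K, Sup K, Inf L, Sup L}"
          proof
            fix z assume z: "z \<in> K \<inter> L"
            show "z \<in> {Inf K, Sup K, Inf L, Sup L}"
            proof (rule ccontr)
              assume "z \<notin> {Inf K, Sup K, Inf L, Sup L}"
              then have "z \<in> interior K" "z \<in> interior L" using z K L
                by (metis IntD1 IntD2 atLeastAtMost_iff greaterThanLessThan_iff insertCI
                    interior_atLeastAtMost_real order_neq_le_trans)+
              then show False using disj by blast
            qed
          qed
          then show "negligible (snd xK \<inter> snd yL)" using xKe yLe
            by (metis snd_conv finite.emptyI finite.insertI negligible_finite negligible_subset finite.emptyI finite.insertI negligible_finite negligible_subset)
        qed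
      qed
      also have "\<dots> \<le> measure lebesgue T"
      proof (rule measure_mono_fmeasurable[OF _ _ Tl])
        show "\<Union>(snd ` B) \<subseteq> T"
        proof clarify
          fix z x K assume xK: "(x,K) \<in> B" and z: "z \<in> snd (x,K)"
          have xKp: "(x,K) \<in> p" and xN: "x \<in> N" using xK unfolding B_def by auto
          have xT: "x \<in> T" using xN T(2) by auto
          have "K \<subseteq> ball x (r x)" using fineD[OF p(2) xKp] xN xT unfolding \<gamma>_def by auto
          then show "z \<in> T" using r(2)[OF xT] z by auto
        qed
        show "\<Union>(snd ` B) \<in> sets lebesgue"
          using GB(4) lmB by (intro sets.finite_UN) (auto dest: fmeasurableD)
      qed
      finally show ?thesis using mT by simp
    qed
    have "(\<Sum>k<card B. norm (\<phi> (rr k) - \<phi> (l k))) < e" using dAC[OF c1 c2 c3] .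
    moreover have "(\<Sum>k<card B. norm (\<phi> (rr k) - \<phi> (l k))) = sum ?f B"
      using sum.reindex_bij_betw[OF h, of ?f] unfolding l_def rr_def
      by (simp add: split_def)
    ultimately show ?thesis by simp
  qed
  finally show ?thesis by simp
qed

lemma mvt_ac:
  fixes \<phi> :: "real \<Rightarrow> 'a::euclidean_space"
  assumes ab: "a \<le> b" and ac: "abs_cont_on a b \<phi>" and N: "negligible N" and M: "M \<ge> 0"
    and good: "\<And>t \<eta>. t \<in> {a..b} - N \<Longrightarrow> \<eta> > 0 \<Longrightarrow>
       \<exists>\<rho>>0. \<forall>s\<in>{a..b}. \<bar>s - t\<bar> < \<rho> \<longrightarrow> norm (\<phi> s - \<phi> t) \<le> (M+\<eta>)*\<bar>s-t\<bar>"
  shows "norm (\<phi> b - \<phi> a) \<le> M*(b-a)"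
proof (rule field_le_epsilon)
  fix \<epsilon> :: real assume \<epsilon>: "\<epsilon> > 0"
  define \<eta> where "\<eta> = \<epsilon> / (2*(b-a+1))"
  have \<eta>: "\<eta> > 0" using \<epsilon> ab by (simp add: \<eta>_def)
  have "norm (\<phi> b - \<phi> a) \<le> (M+\<eta>)*(b-a) + \<epsilon>/2"
    using mvt_ac_aux[OF ab ac N M \<eta>, of "\<epsilon>/2"] \<epsilon> good \<eta> by auto
  also have "\<eta>*(b-a) \<le> \<epsilon>/2"
  proof -
    have "\<eta>*(b-a) \<le> \<eta>*(b-a+1)" using \<eta> by simp
    also have "\<dots> = \<epsilon>/2"
    proof -
      have h: "b - a + 1 > 0" using ab by simp
      then show ?thesis by (simp add: \<eta>_def field_simps)
    qed
    finally show ?thesis .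
  qed
  then have "(M+\<eta>)*(b-a) + \<epsilon>/2 \<le> M*(b-a) + \<epsilon>" by (simp add: algebra_simps)
  finally show "norm (\<phi> b - \<phi> a) \<le> M*(b-a) + \<epsilon>" .
qed

lemma abs_cont_on_continuous:
  assumes ac: "abs_cont_on a b \<phi>"
  shows "continuous_on {a..b} \<phi>"
  unfolding continuous_on_iff
proof (intro ballI allI impI)
  fix s e :: real assume s: "s \<in> {a..b}" and e: "e > 0"
  obtain d where d: "d > 0" and dAC: "\<And>(n::nat) (l::nat \<Rightarrow> real) (r::nat \<Rightarrow> real).
        (\<forall>k<n. a \<le> l k \<and> l k \<le> r k \<and> r k \<le> b) \<Longrightarrow>
        (\<forall>i<n. \<forall>j<n. i \<noteq> j \<longrightarrow> {l i<..<r i} \<inter> {l j<..<r j} = {}) \<Longrightarrow>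
        (\<Sum>k<n. r k - l k) < d
        \<Longrightarrow> (\<Sum>k<n. norm (\<phi> (r k) - \<phi> (l k))) < e"
    using ac e unfolding abs_cont_on_def by meson
  show "\<exists>d>0. \<forall>s'\<in>{a..b}. dist s' s < d \<longrightarrow> dist (\<phi> s') (\<phi> s) < e"
  proof (intro exI conjI ballI impI)
    show "d > 0" using d .
    fix s' assume s': "s' \<in> {a..b}" and ds: "dist s' s < d"
    have "(\<Sum>k<1::nat. norm (\<phi> ((\<lambda>_. max s s') k) - \<phi> ((\<lambda>_. min s s') k))) < e"
      by (rule dAC) (use s s' ds in \<open>auto simp: dist_real_def\<close>)
    then have "norm (\<phi> (max s s') - \<phi> (min s s')) < e" by simp
    then show "dist (\<phi> s') (\<phi> s) < e"
      by (cases "s \<le> s'") (auto simp: dist_norm norm_minus_commute max_def min_def)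
  qed
qed

lemma deriv_good:
  fixes \<phi> :: "real \<Rightarrow> 'a::real_normed_vector"
  assumes d: "(\<phi> has_vector_derivative v) (at t within S)" and v: "norm v \<le> M" and \<eta>: "\<eta> > 0"
  shows "\<exists>\<rho>>0. \<forall>s\<in>S. \<bar>s - t\<bar> < \<rho> \<longrightarrow> norm (\<phi> s - \<phi> t) \<le> (M+\<eta>)*\<bar>s-t\<bar>"
proof -
  have "(\<phi> has_derivative (\<lambda>h. h *\<^sub>R v)) (at t within S)"
    using d by (simp add: has_vector_derivative_def)
  then obtain \<rho> where \<rho>: "\<rho> > 0" "\<forall>s\<in>S. norm (s - t) < \<rho> \<longrightarrow>
      norm (\<phi> s - \<phi> t - (s - t) *\<^sub>R v) \<le> \<eta> * norm (s - t)"
    using \<eta> unfolding has_derivative_within_alt by blast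
  show ?thesis
  proof (intro exI conjI ballI impI)
    show "\<rho> > 0" using \<rho>(1) .
    fix s assume s: "s \<in> S" "\<bar>s - t\<bar> < \<rho>"
    have "norm (\<phi> s - \<phi> t) \<le> norm ((s - t) *\<^sub>R v) + norm (\<phi> s - \<phi> t - (s - t) *\<^sub>R v)"
      by (metis add.commute diff_add_cancel norm_triangle_ineq)
    also have "\<dots> \<le> \<bar>s-t\<bar> * M + \<eta> * \<bar>s - t\<bar>"
      using \<rho>(2) s v by (intro add_mono) (auto intro: mult_left_mono)
    finally show "norm (\<phi> s - \<phi> t) \<le> (M+\<eta>)*\<bar>s-t\<bar>" by (simp add: algebra_simps)
  qed
qed

lemma solution_null:
  assumes "is_solution G I \<phi>"
  obtains N where "negligible N"
    "\<And>t. t \<in> I - N \<Longrightarrow> \<exists>v. (\<phi> has_vector_derivative v) (at t within I) \<and> v \<in> G (\<phi> t)"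
proof -
  have "AE t in lebesgue. t \<in> I \<longrightarrow> (\<exists>v. (\<phi> has_vector_derivative v) (at t within I) \<and> v \<in> G (\<phi> t))"
    using assms unfolding is_solution_def by blast
  then obtain N where N: "\<And>t. t \<in> space lebesgue - N \<Longrightarrow>
      t \<in> I \<longrightarrow> (\<exists>v. (\<phi> has_vector_derivative v) (at t within I) \<and> v \<in> G (\<phi> t))"
    "N \<in> null_sets lebesgue"
    using AE_E3 by blast
  have "negligible N" using N(2) negligible_iff_null_sets by blast
  moreover have "\<And>t. t \<in> I - N \<Longrightarrow> \<exists>v. (\<phi> has_vector_derivative v) (at t within I) \<and> v \<in> G (\<phi> t)"
    using N(1) by auto
  ultimately show ?thesis using that by blast
qed

lemma escape:
  fixes \<phi> :: "real \<Rightarrow> 'a::euclidean_space"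
  assumes sol: "is_solution G I \<phi>" and x: "\<phi> 0 = x" and TI: "{0..T} \<subseteq> I"
    and M: "M \<ge> 0" and bd: "\<And>p v. p \<in> cball x 1 \<Longrightarrow> v \<in> G p \<Longrightarrow> norm v \<le> M"
    and MT: "M*T < 1"
  shows "\<forall>s\<in>{0..T}. norm (\<phi> s - x) \<le> M * s"
proof -
  obtain N where N: "negligible N"
    "\<And>t. t \<in> I - N \<Longrightarrow> \<exists>v. (\<phi> has_vector_derivative v) (at t within I) \<and> v \<in> G (\<phi> t)"
    using solution_null[OF sol] by blast
  have acI: "loc_abs_cont_on I \<phi>" using sol unfolding is_solution_def by blast
  have key: "norm (\<phi> s - x) \<le> M * s"
    if s: "s \<in> {0..T}" and N': "negligible N'" and inK: "\<And>r. r \<in> {0..s} - N' \<Longrightarrow> dist (\<phi> r) x < 1"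
    for s N'
  proof -
    have sub: "{0..s} \<subseteq> I" using s TI by auto
    have ac: "abs_cont_on 0 s \<phi>" using acI sub unfolding loc_abs_cont_on_def by blast
    have "norm (\<phi> s - \<phi> 0) \<le> M*(s-0)"
    proof (rule mvt_ac[OF _ ac negligible_Un[OF N(1) N'] M])
      show "0 \<le> s" using s by simp
      fix t \<eta> :: real assume t: "t \<in> {0..s} - (N \<union> N')" and \<eta>: "\<eta> > 0"
      have tI: "t \<in> I" using t sub by auto
      obtain v where v: "(\<phi> has_vector_derivative v) (at t within I)" "v \<in> G (\<phi> t)"
        using N(2)[of t] tI t by blast
      have "dist (\<phi> t) x < 1" using inK[of t] t by auto
      then have "norm v \<le> M" using bd[OF _ v(2)] by (simp add: dist_commute)
      from deriv_good[OF v(1) this \<eta>] obtain \<rho> where "\<rho>>0"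
        "\<forall>s\<in>I. \<bar>s - t\<bar> < \<rho> \<longrightarrow> norm (\<phi> s - \<phi> t) \<le> (M+\<eta>)*\<bar>s-t\<bar>" by blast
      then show "\<exists>\<rho>>0. \<forall>s\<in>{0..s}. \<bar>s - t\<bar> < \<rho> \<longrightarrow> norm (\<phi> s - \<phi> t) \<le> (M+\<eta>)*\<bar>s-t\<bar>"
        using sub by blast
    qed
    then show ?thesis using x by simp
  qed
  define A where "A = {s\<in>{0..T}. dist (\<phi> s) x \<ge> 1}"
  have A_empty: "A = {}"
  proof (rule ccontr)
    assume ne: "A \<noteq> {}"
    have "T \<ge> 0" using ne unfolding A_def by auto
    have cont: "continuous_on {0..T} \<phi>"
      using abs_cont_on_continuous acI TI unfolding loc_abs_cont_on_def by blast
    have "closed A"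
    proof -
      have c2: "continuous_on {0..T} (\<lambda>s. dist (\<phi> s) x)"
        by (intro continuous_on_dist cont continuous_on_const)
      have "closed ({0..T} \<inter> (\<lambda>s. dist (\<phi> s) x) -` {1..})"
        by (rule continuous_closed_preimage[OF c2]) auto
      moreover have "A = {0..T} \<inter> (\<lambda>s. dist (\<phi> s) x) -` {1..}" unfolding A_def by auto
      ultimately show ?thesis by simp
    qed
    have bdd: "bdd_below A" unfolding A_def by (rule bdd_belowI[of _ 0]) auto
    define \<sigma> where "\<sigma> = Inf A"
    have \<sigma>A: "\<sigma> \<in> A" unfolding \<sigma>_def using closed_contains_Inf[OF ne bdd \<open>closed A\<close>] .
    have lt: "dist (\<phi> r) x < 1" if "r \<in> {0..\<sigma>} - {\<sigma>}" for r
    proof (rule ccontr)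
      assume "\<not> dist (\<phi> r) x < 1"
      then have "r \<in> A" using that \<sigma>A unfolding A_def by auto
      then have "\<sigma> \<le> r" unfolding \<sigma>_def using cInf_lower[OF _ bdd] by blast
      then show False using that by auto
    qed
    have "norm (\<phi> \<sigma> - x) \<le> M * \<sigma>"
      using key[of \<sigma> "{\<sigma>}"] \<sigma>A lt unfolding A_def by auto
    also have "\<dots> \<le> M*T" using \<sigma>A M unfolding A_def by (auto intro: mult_left_mono)
    finally have "dist (\<phi> \<sigma>) x < 1" using MT by (simp add: dist_norm)
    then show False using \<sigma>A unfolding A_def by auto
  qed
  show ?thesis
  proof
    fix s assume s: "s \<in> {0..T}"
    show "norm (\<phi> s - x) \<le> M * s"
    proof (rule key[OF s negligible_empty])
      fix r assume r: "r \<in> {0..s} - {}"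
      then have "r \<in> {0..T}" using s by auto
      moreover have "r \<notin> A" using A_empty by auto
      ultimately show "dist (\<phi> r) x < 1" unfolding A_def by auto
    qed
  qed
qed

lemma usc_bounded:
  fixes F :: "'a::metric_space \<Rightarrow> 'b::real_normed_vector set"
  assumes usc: "usc_setmap F" and cpt: "\<And>x. compact (F x)" and K: "compact K"
  shows "\<exists>M>0. \<forall>p\<in>K. \<forall>v\<in>F p. norm v \<le> M"
proof -
  have ex: "\<exists>U R. open U \<and> p \<in> U \<and> R > 0 \<and> (\<forall>q\<in>U. \<forall>v\<in>F q. norm v < R)" for p
  proof -
    obtain R where R: "R > 0" "\<forall>v\<in>F p. norm v \<le> R"
      using compact_imp_bounded[OF cpt[of p]] bounded_pos by blast
    have "F p \<subseteq> ball 0 (R+1)" using R by (auto simp: dist_norm)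
    then have "\<forall>\<^sub>F q in nhds p. F q \<subseteq> ball 0 (R+1)"
      using usc unfolding usc_setmap_def by blast
    then obtain U where "open U" "p \<in> U" "\<forall>q\<in>U. F q \<subseteq> ball 0 (R+1)"
      unfolding eventually_nhds by blast
    then show ?thesis using R(1)
      by (intro exI[of _ U] exI[of _ "R+1"]) (auto simp: dist_norm subset_iff)
  qed
  have "\<forall>p. \<exists>UR. open (fst UR) \<and> p \<in> fst UR \<and> snd UR > 0 \<and> (\<forall>q\<in>fst UR. \<forall>v\<in>F q. norm v < snd UR)"
  proof
    fix p
    obtain U R where "open U \<and> p \<in> U \<and> R > 0 \<and> (\<forall>q\<in>U. \<forall>v\<in>F q. norm v < R)"
      using ex[of p] by blast
    then show "\<exists>UR. open (fst UR) \<and> p \<in> fst UR \<and> snd UR > 0 \<and> (\<forall>q\<in>fst UR. \<forall>v\<in>F q. norm v < snd UR)"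
      by (intro exI[of _ "(U,R)"]) simp
  qed
  from choice[OF this] obtain g where g: "\<forall>p. open (fst (g p)) \<and> p \<in> fst (g p) \<and> snd (g p) > 0 \<and> (\<forall>q\<in>fst (g p). \<forall>v\<in>F q. norm v < snd (g p))"
    by blast
  define U where "U p = fst (g p)" for p
  define R where "R p = snd (g p)" for p
  have UR: "\<And>p. open (U p) \<and> p \<in> U p \<and> R p > 0 \<and> (\<forall>q\<in>U p. \<forall>v\<in>F q. norm v < R p)"
    using g unfolding U_def R_def by blast
  obtain C where C: "C \<subseteq> K" "finite C" "K \<subseteq> \<Union>(U ` C)"
  proof (rule compactE_image[OF K, of K U])
    show "open (U p)" if "p \<in> K" for p using UR by blast
    show "K \<subseteq> (\<Union>c\<in>K. U c)" using UR by blast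
  qed blast
  define M where "M = 1 + sum R C"
  have sR: "R c \<le> sum R C" if "c \<in> C" for c
  proof (rule member_le_sum[OF that _ C(2)])
    show "0 \<le> R x" for x using UR[of x] by linarith
  qed
  have "0 \<le> sum R C"
  proof (rule sum_nonneg)
    show "0 \<le> R x" for x using UR[of x] by linarith
  qed
  then have M0: "M > 0" unfolding M_def by simp
  have "\<forall>p\<in>K. \<forall>v\<in>F p. norm v \<le> M"
  proof (intro ballI)
    fix p v assume p: "p \<in> K" and v: "v \<in> F p"
    obtain c where c: "c \<in> C" "p \<in> U c" using C(3) p by blast
    have "norm v < R c" using UR[of c] c v by blast
    then show "norm v \<le> M" using sR[OF c(1)] unfolding M_def by linarith
  qed
  then show ?thesis using M0 by blast
qed

lemma unif_lsc:
  fixes F :: "'a::metric_space \<Rightarrow> 'b::real_normed_vector set"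
  assumes cont: "continuous_setmap F" and cpt: "\<And>x. compact (F x)" and K: "compact K" and r: "r > 0"
  shows "\<exists>\<rho>>0. \<forall>p\<in>K. \<forall>q. dist p q < \<rho> \<longrightarrow> (\<forall>v\<in>F p. \<exists>u\<in>F q. dist v u < r)"
proof -
  have usc: "usc_setmap F" and lsc: "lsc_setmap F" using cont unfolding continuous_setmap_def by auto
  have loc: "\<exists>\<epsilon>>0. \<forall>p\<in>ball p0 \<epsilon>. \<forall>q\<in>ball p0 \<epsilon>. \<forall>v\<in>F p. \<exists>u\<in>F q. dist v u < r" for p0
  proof -
    obtain C where C: "C \<subseteq> F p0" "finite C" "F p0 \<subseteq> \<Union>((\<lambda>c. ball c (r/4)) ` C)"
      using compactE_image[OF cpt[of p0], of "F p0" "\<lambda>c. ball c (r/4)"] r by force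
    define U where "U = \<Union>((\<lambda>a. ball a (r/2)) ` F p0)"
    have "open U" unfolding U_def by auto
    moreover have "F p0 \<subseteq> U" unfolding U_def using r by force
    ultimately have ev1: "\<forall>\<^sub>F q in nhds p0. F q \<subseteq> U" using usc unfolding usc_setmap_def by blast
    have "\<forall>c\<in>C. \<forall>\<^sub>F q in nhds p0. F q \<inter> ball c (r/4) \<noteq> {}"
    proof
      fix c assume c: "c \<in> C"
      have "F p0 \<inter> ball c (r/4) \<noteq> {}" using c C(1) r by force
      then show "\<forall>\<^sub>F q in nhds p0. F q \<inter> ball c (r/4) \<noteq> {}"
        using lsc unfolding lsc_setmap_def by (meson open_ball)
    qed
    then have ev2: "\<forall>\<^sub>F q in nhds p0. \<forall>c\<in>C. F q \<inter> ball c (r/4) \<noteq> {}"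
      by (rule eventually_ball_finite[OF C(2)])
    have "\<forall>\<^sub>F q in nhds p0. F q \<subseteq> U \<and> (\<forall>c\<in>C. F q \<inter> ball c (r/4) \<noteq> {})"
      using eventually_conj[OF ev1 ev2] .
    then obtain W where W: "open W" "p0 \<in> W" "\<And>q. q \<in> W \<Longrightarrow> F q \<subseteq> U \<and> (\<forall>c\<in>C. F q \<inter> ball c (r/4) \<noteq> {})"
      unfolding eventually_nhds by blast
    obtain \<epsilon> where \<epsilon>: "\<epsilon> > 0" "ball p0 \<epsilon> \<subseteq> W" using W(1,2) open_contains_ball by blast
    have "\<forall>p\<in>ball p0 \<epsilon>. \<forall>q\<in>ball p0 \<epsilon>. \<forall>v\<in>F p. \<exists>u\<in>F q. dist v u < r"
    proof (intro ballI)
      fix p q v assume p: "p \<in> ball p0 \<epsilon>" and q: "q \<in> ball p0 \<epsilon>" and v: "v \<in> F p"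
      have "v \<in> U" using W(3)[of p] p \<epsilon>(2) v by blast
      then obtain a where a: "a \<in> F p0" "dist a v < r/2" unfolding U_def by auto
      then obtain c where c: "c \<in> C" "dist c a < r/4" using C(3) by auto
      have "F q \<inter> ball c (r/4) \<noteq> {}" using W(3)[of q] q \<epsilon>(2) c(1) by blast
      then obtain u where u: "u \<in> F q" "dist c u < r/4" by auto
      have "dist v u \<le> dist v a + dist a c + dist c u"
        by (metis dist_triangle add.commute dist_triangle2 order_trans add_right_mono)
      also have "\<dots> < r" using a c u by (simp add: dist_commute)
      finally show "\<exists>u\<in>F q. dist v u < r" using u(1) by blast
    qed
    then show ?thesis using \<epsilon>(1) by blast
  qed
  then have "\<forall>p0. \<exists>e. e > 0 \<and> (\<forall>p\<in>ball p0 e. \<forall>q\<in>ball p0 e. \<forall>v\<in>F p. \<exists>u\<in>F q. dist v u < r)"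
    by blast
  from choice[OF this] obtain \<epsilon> where \<epsilon>: "\<And>p0. \<epsilon> p0 > 0 \<and> (\<forall>p\<in>ball p0 (\<epsilon> p0). \<forall>q\<in>ball p0 (\<epsilon> p0). \<forall>v\<in>F p. \<exists>u\<in>F q. dist v u < r)"
    by blast
  obtain \<delta> where \<delta>: "\<delta> > 0" "\<And>x. x \<in> K \<Longrightarrow> \<exists>G \<in> (\<lambda>p0. ball p0 (\<epsilon> p0)) ` K. ball x \<delta> \<subseteq> G"
  proof -
    have cov: "K \<subseteq> \<Union>((\<lambda>p0. ball p0 (\<epsilon> p0)) ` K)"
    proof
      fix x assume "x \<in> K"
      moreover have "x \<in> ball x (\<epsilon> x)" using \<epsilon>[of x] by simp
      ultimately show "x \<in> \<Union>((\<lambda>p0. ball p0 (\<epsilon> p0)) ` K)" by blast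
    qed
    have opn: "\<And>G. G \<in> (\<lambda>p0. ball p0 (\<epsilon> p0)) ` K \<Longrightarrow> open G" by auto
    show ?thesis using Heine_Borel_lemma[OF K cov opn] that by blast
  qed
  have "\<forall>p\<in>K. \<forall>q. dist p q < \<delta> \<longrightarrow> (\<forall>v\<in>F p. \<exists>u\<in>F q. dist v u < r)"
  proof (intro ballI allI impI)
    fix p q v assume p: "p \<in> K" and pq: "dist p q < \<delta>" and v: "v \<in> F p"
    obtain p0 where "p0 \<in> K" "ball p \<delta> \<subseteq> ball p0 (\<epsilon> p0)" using \<delta>(2)[OF p] by blast
    moreover have "p \<in> ball p \<delta>" "q \<in> ball p \<delta>" using \<delta>(1) pq by auto
    ultimately show "\<exists>u\<in>F q. dist v u < r" using \<epsilon>[of p0] v by blast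
  qed
  then show ?thesis using \<delta>(1) by blast
qed

lemma abs_cont_onD:
  assumes "abs_cont_on a b f" "e > 0"
  obtains d where "d > 0" "\<And>(n::nat) (l::nat \<Rightarrow> real) (r::nat \<Rightarrow> real).
        (\<forall>k<n. a \<le> l k \<and> l k \<le> r k \<and> r k \<le> b) \<Longrightarrow>
        (\<forall>i<n. \<forall>j<n. i \<noteq> j \<longrightarrow> {l i<..<r i} \<inter> {l j<..<r j} = {}) \<Longrightarrow>
        (\<Sum>k<n. r k - l k) < d
        \<Longrightarrow> (\<Sum>k<n. norm (f (r k) - f (l k))) < e"
proof -
  obtain d where d: "d > 0" and H: "\<forall>(n::nat) (l::nat \<Rightarrow> real) (r::nat \<Rightarrow> real).
        (\<forall>k<n. a \<le> l k \<and> l k \<le> r k \<and> r k \<le> b) \<and>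
        (\<forall>i<n. \<forall>j<n. i \<noteq> j \<longrightarrow> {l i<..<r i} \<inter> {l j<..<r j} = {}) \<and>
        (\<Sum>k<n. r k - l k) < d
        \<longrightarrow> (\<Sum>k<n. norm (f (r k) - f (l k))) < e"
    using assms unfolding abs_cont_on_def by blast
  show thesis
  proof (rule that[OF d])
    fix n :: nat and l r :: "nat \<Rightarrow> real"
    assume "\<forall>k<n. a \<le> l k \<and> l k \<le> r k \<and> r k \<le> b"
      "\<forall>i<n. \<forall>j<n. i \<noteq> j \<longrightarrow> {l i<..<r i} \<inter> {l j<..<r j} = {}"
      "(\<Sum>k<n. r k - l k) < d"
    then show "(\<Sum>k<n. norm (f (r k) - f (l k))) < e" using H by blast
  qed
qed

lemma abs_cont_on_empty:
  assumes "b < a" shows "abs_cont_on a b f"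
  unfolding abs_cont_on_def
proof (intro allI impI exI[of _ 1] conjI)
  fix e :: real and n :: nat and l r :: "nat \<Rightarrow> real" assume e: "e > 0"
    and h: "(\<forall>k<n. a \<le> l k \<and> l k \<le> r k \<and> r k \<le> b) \<and>
       (\<forall>i<n. \<forall>j<n. i \<noteq> j \<longrightarrow> {l i<..<r i} \<inter> {l j<..<r j} = {}) \<and> (\<Sum>k<n. r k - l k) < 1"
  have "n = 0"
  proof (rule ccontr)
    assume "n \<noteq> 0"
    then have "a \<le> l 0 \<and> l 0 \<le> r 0 \<and> r 0 \<le> b" using h by auto
    then show False using assms by linarith
  qed
  then show "(\<Sum>k<n. norm (f (r k) - f (l k))) < e" using e by simp
qed simp

lemma abs_cont_on_mono:
  assumes "abs_cont_on a b f" "a \<le> a'" "b' \<le> b"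
  shows "abs_cont_on a' b' f"
  unfolding abs_cont_on_def
proof (intro allI impI)
  fix e :: real assume e: "e > 0"
  obtain d where d: "d > 0" and dAC: "\<And>(n::nat) (l::nat \<Rightarrow> real) (r::nat \<Rightarrow> real).
        (\<forall>k<n. a \<le> l k \<and> l k \<le> r k \<and> r k \<le> b) \<Longrightarrow>
        (\<forall>i<n. \<forall>j<n. i \<noteq> j \<longrightarrow> {l i<..<r i} \<inter> {l j<..<r j} = {}) \<Longrightarrow>
        (\<Sum>k<n. r k - l k) < d
        \<Longrightarrow> (\<Sum>k<n. norm (f (r k) - f (l k))) < e"
    using abs_cont_onD[OF assms(1) e] by blast
  show "\<exists>d>0. \<forall>(n::nat) (l::nat \<Rightarrow> real) (r::nat \<Rightarrow> real). (\<forall>k<n. a' \<le> l k \<and> l k \<le> r k \<and> r k \<le> b') \<and>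
       (\<forall>i<n. \<forall>j<n. i \<noteq> j \<longrightarrow> {l i<..<r i} \<inter> {l j<..<r j} = {}) \<and> (\<Sum>k<n. r k - l k) < d \<longrightarrow>
       (\<Sum>k<n. norm (f (r k) - f (l k))) < e"
  proof (intro exI[of _ d] conjI allI impI d)
    fix n :: nat and l r :: "nat \<Rightarrow> real" assume h: "(\<forall>k<n. a' \<le> l k \<and> l k \<le> r k \<and> r k \<le> b') \<and>
       (\<forall>i<n. \<forall>j<n. i \<noteq> j \<longrightarrow> {l i<..<r i} \<inter> {l j<..<r j} = {}) \<and> (\<Sum>k<n. r k - l k) < d"
    have "\<forall>k<n. a \<le> l k \<and> l k \<le> r k \<and> r k \<le> b"
    proof (intro allI impI)
      fix k assume "k < n"
      then have "a' \<le> l k \<and> l k \<le> r k \<and> r k \<le> b'" using h by blast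
      then show "a \<le> l k \<and> l k \<le> r k \<and> r k \<le> b" using assms(2,3) by linarith
    qed
    moreover have "\<forall>i<n. \<forall>j<n. i \<noteq> j \<longrightarrow> {l i<..<r i} \<inter> {l j<..<r j} = {}" using h by blast
    moreover have "(\<Sum>k<n. r k - l k) < d" using h by blast
    ultimately show "(\<Sum>k<n. norm (f (r k) - f (l k))) < e" by (rule dAC)
  qed
qed

lemma abs_cont_shift_add:
  fixes \<phi> :: "real \<Rightarrow> 'a::real_normed_vector"
  assumes ac: "abs_cont_on a b \<phi>"
  shows "abs_cont_on (a - c) (b - c) (\<lambda>r. \<phi> (r + c) + r *\<^sub>R w)"
  unfolding abs_cont_on_def
proof (intro allI impI)
  fix e :: real assume e: "e > 0"
  obtain d1 where d1: "d1 > 0" and dAC: "\<And>(n::nat) (l::nat \<Rightarrow> real) (r::nat \<Rightarrow> real).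
        (\<forall>k<n. a \<le> l k \<and> l k \<le> r k \<and> r k \<le> b) \<Longrightarrow>
        (\<forall>i<n. \<forall>j<n. i \<noteq> j \<longrightarrow> {l i<..<r i} \<inter> {l j<..<r j} = {}) \<Longrightarrow>
        (\<Sum>k<n. r k - l k) < d1
        \<Longrightarrow> (\<Sum>k<n. norm (\<phi> (r k) - \<phi> (l k))) < e/2"
    using abs_cont_onD[OF ac half_gt_zero[OF e]] by blast
  define d where "d = min d1 (e / (2 * (norm w + 1)))"
  have "2 * (norm w + 1) > 0" by (simp add: add_nonneg_pos)
  then have "e / (2 * (norm w + 1)) > 0" using e by (rule divide_pos_pos[rotated])
  then have d: "d > 0" using d1 unfolding d_def by simp
  have "\<forall>(n::nat) (l::nat \<Rightarrow> real) (r::nat \<Rightarrow> real). (\<forall>k<n. a - c \<le> l k \<and> l k \<le> r k \<and> r k \<le> b - c) \<and>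
       (\<forall>i<n. \<forall>j<n. i \<noteq> j \<longrightarrow> {l i<..<r i} \<inter> {l j<..<r j} = {}) \<and> (\<Sum>k<n. r k - l k) < d \<longrightarrow>
       (\<Sum>k<n. norm ((\<phi> (r k + c) + r k *\<^sub>R w) - (\<phi> (l k + c) + l k *\<^sub>R w))) < e"
  proof (intro allI impI)
    fix n :: nat and l r :: "nat \<Rightarrow> real" assume h: "(\<forall>k<n. a - c \<le> l k \<and> l k \<le> r k \<and> r k \<le> b - c) \<and>
       (\<forall>i<n. \<forall>j<n. i \<noteq> j \<longrightarrow> {l i<..<r i} \<inter> {l j<..<r j} = {}) \<and> (\<Sum>k<n. r k - l k) < d"
    have h1: "\<forall>k<n. a \<le> l k + c \<and> l k + c \<le> r k + c \<and> r k + c \<le> b"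
    proof (intro allI impI)
      fix k assume "k < n"
      then have "a - c \<le> l k \<and> l k \<le> r k \<and> r k \<le> b - c" using h by blast
      then show "a \<le> l k + c \<and> l k + c \<le> r k + c \<and> r k + c \<le> b" by linarith
    qed
    have h2: "\<forall>i<n. \<forall>j<n. i \<noteq> j \<longrightarrow> {l i + c<..<r i + c} \<inter> {l j + c<..<r j + c} = {}"
    proof (intro allI impI)
      fix i j assume ij: "i < n" "j < n" "i \<noteq> j"
      have "{l i<..<r i} \<inter> {l j<..<r j} = {}" using h ij by blast
      then show "{l i + c<..<r i + c} \<inter> {l j + c<..<r j + c} = {}"
        by (auto simp: disjoint_iff)
    qed
    have sumd: "(\<Sum>k<n. r k - l k) < d" using h by blast
    have h3: "(\<Sum>k<n. (r k + c) - (l k + c)) < d1" using sumd unfolding d_def by simp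
    have A: "(\<Sum>k<n. norm (\<phi> (r k + c) - \<phi> (l k + c))) < e/2"
      using dAC[of n "\<lambda>k. l k + c" "\<lambda>k. r k + c"] h1 h2 h3 by blast
    have B: "norm w * (\<Sum>k<n. r k - l k) \<le> e/2"
    proof -
      have "norm w * (\<Sum>k<n. r k - l k) \<le> norm w * (e / (2 * (norm w + 1)))"
        using sumd unfolding d_def by (intro mult_left_mono) auto
      also have "\<dots> \<le> (norm w + 1) * (e / (2 * (norm w + 1)))"
        using e by (intro mult_right_mono) auto
      also have "\<dots> = e/2"
      proof -
        have "norm w + 1 > 0" by (simp add: add_nonneg_pos)
        then show ?thesis by (simp add: field_simps)
      qed
      finally show ?thesis .
    qed
    have "(\<Sum>k<n. norm ((\<phi> (r k + c) + r k *\<^sub>R w) - (\<phi> (l k + c) + l k *\<^sub>R w)))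
        \<le> (\<Sum>k<n. norm (\<phi> (r k + c) - \<phi> (l k + c)) + norm w * (r k - l k))"
    proof (rule sum_mono)
      fix k assume k: "k \<in> {..<n}"
      have lr: "l k \<le> r k" using h k by auto
      have "(\<phi> (r k + c) + r k *\<^sub>R w) - (\<phi> (l k + c) + l k *\<^sub>R w) =
          (\<phi> (r k + c) - \<phi> (l k + c)) + (r k - l k) *\<^sub>R w" by (simp add: algebra_simps)
      also have "norm \<dots> \<le> norm (\<phi> (r k + c) - \<phi> (l k + c)) + norm ((r k - l k) *\<^sub>R w)"
        by (rule norm_triangle_ineq)
      also have "norm ((r k - l k) *\<^sub>R w) = norm w * (r k - l k)" using lr by simp
      finally show "norm ((\<phi> (r k + c) + r k *\<^sub>R w) - (\<phi> (l k + c) + l k *\<^sub>R w))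
          \<le> norm (\<phi> (r k + c) - \<phi> (l k + c)) + norm w * (r k - l k)" .
    qed
    also have "\<dots> = (\<Sum>k<n. norm (\<phi> (r k + c) - \<phi> (l k + c))) + norm w * (\<Sum>k<n. r k - l k)"
      by (simp add: sum.distrib sum_distrib_left)
    also have "\<dots> < e" using A B by linarith
    finally show "(\<Sum>k<n. norm ((\<phi> (r k + c) + r k *\<^sub>R w) - (\<phi> (l k + c) + l k *\<^sub>R w))) < e" .
  qed
  then show "\<exists>d>0. \<forall>(n::nat) (l::nat \<Rightarrow> real) (r::nat \<Rightarrow> real). (\<forall>k<n. a - c \<le> l k \<and> l k \<le> r k \<and> r k \<le> b - c) \<and>
       (\<forall>i<n. \<forall>j<n. i \<noteq> j \<longrightarrow> {l i<..<r i} \<inter> {l j<..<r j} = {}) \<and> (\<Sum>k<n. r k - l k) < d \<longrightarrow>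
       (\<Sum>k<n. norm ((\<phi> (r k + c) + r k *\<^sub>R w) - (\<phi> (l k + c) + l k *\<^sub>R w))) < e"
    using d by blast
qed

lemma pert_solution:
  fixes \<phi> :: "real \<Rightarrow> 'a::euclidean_space"
  assumes sol: "is_solution G I \<phi>" and sub: "{a..b} \<subseteq> I" and c0: "a - c \<le> 0" "0 \<le> b - c"
    and cond: "\<And>s v. s \<in> {a..b} \<Longrightarrow> v \<in> G (\<phi> s) \<Longrightarrow>
        \<exists>u\<in>H (\<phi> s + (s - c) *\<^sub>R w). norm (v + w - u) \<le> \<epsilon> (\<phi> s + (s - c) *\<^sub>R w)"
  shows "is_solution (inflate H \<epsilon>) {a-c..b-c} (\<lambda>r. \<phi> (r + c) + r *\<^sub>R w)"
proof -
  let ?J = "{a-c..b-c}"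
  let ?\<psi> = "\<lambda>r. \<phi> (r + c) + r *\<^sub>R w"
  have acI: "loc_abs_cont_on I \<phi>" using sol unfolding is_solution_def by blast
  have ac: "abs_cont_on a b \<phi>" using acI sub unfolding loc_abs_cont_on_def by blast
  have acJ: "abs_cont_on (a-c) (b-c) ?\<psi>" by (rule abs_cont_shift_add[OF ac])
  have lac: "loc_abs_cont_on ?J ?\<psi>"
    unfolding loc_abs_cont_on_def
  proof (intro allI impI)
    fix a' b' assume ab': "{a'..b'} \<subseteq> ?J"
    show "abs_cont_on a' b' ?\<psi>"
    proof (cases "b' < a'")
      case True then show ?thesis by (rule abs_cont_on_empty)
    next
      case False
      then have "a - c \<le> a'" "b' \<le> b - c" using ab' by auto
      then show ?thesis using abs_cont_on_mono[OF acJ] by blast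
    qed
  qed
  obtain N where N: "negligible N"
    "\<And>t. t \<in> I - N \<Longrightarrow> \<exists>v. (\<phi> has_vector_derivative v) (at t within I) \<and> v \<in> G (\<phi> t)"
    using solution_null[OF sol] by blast
  define N' where "N' = (+) (-c) ` N"
  have N': "negligible N'" unfolding N'_def by (rule negligible_translation[OF N(1)])
  have img: "(\<lambda>r. r + c) ` ?J = {a..b}"
  proof
    show "(\<lambda>r. r + c) ` ?J \<subseteq> {a..b}" by auto
    show "{a..b} \<subseteq> (\<lambda>r. r + c) ` ?J"
    proof
      fix s assume "s \<in> {a..b}"
      then have "s - c \<in> ?J" "s = (s - c) + c" by auto
      then show "s \<in> (\<lambda>r. r + c) ` ?J" by blast
    qed
  qed
  have der: "\<exists>v. (?\<psi> has_vector_derivative v) (at r within ?J) \<and> v \<in> inflate H \<epsilon> (?\<psi> r)"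
    if r: "r \<in> ?J" "r \<notin> N'" for r
  proof -
    have sI: "r + c \<in> I" "r + c \<notin> N" "r + c \<in> {a..b}" using r sub unfolding N'_def by (auto simp: image_iff)
    then obtain v where v: "(\<phi> has_vector_derivative v) (at (r + c) within I)" "v \<in> G (\<phi> (r + c))"
      using N(2)[of "r + c"] by blast
    have v2: "(\<phi> has_vector_derivative v) (at (r + c) within (\<lambda>r. r + c) ` ?J)"
      using has_vector_derivative_within_subset[OF v(1)] sub img by auto
    have sh: "((\<lambda>r. r + c) has_vector_derivative 1) (at r within ?J)"
      by (auto intro!: derivative_eq_intros)
    have d1: "((\<lambda>r. \<phi> (r + c)) has_vector_derivative v) (at r within ?J)"
      using vector_diff_chain_within[OF sh v2] by (simp add: o_def)
    have d2: "(?\<psi> has_vector_derivative (v + w)) (at r within ?J)"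
      using d1 by (auto intro!: derivative_eq_intros)
    obtain u where u: "u \<in> H (\<phi> (r + c) + (r + c - c) *\<^sub>R w)"
      "norm (v + w - u) \<le> \<epsilon> (\<phi> (r + c) + (r + c - c) *\<^sub>R w)"
      using cond[OF sI(3) v(2)] by blast
    have e1: "v + w = u + (v + w - u)" by simp
    have e2: "v + w - u \<in> cball 0 (\<epsilon> (?\<psi> r))" using u(2) by (simp add: dist_norm norm_minus_commute)
    have "v + w \<in> inflate H \<epsilon> (?\<psi> r)"
    proof -
      have u1: "u \<in> H (?\<psi> r)" using u(1) by simp
      show ?thesis unfolding inflate_def using u1 e1 e2 by blast
    qed
    then show ?thesis using d2 by blast
  qed
  have ae: "AE t in lebesgue. t \<in> ?J \<longrightarrow> (\<exists>v. (?\<psi> has_vector_derivative v) (at t within ?J) \<and> v \<in> inflate H \<epsilon> (?\<psi> t))"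
  proof (rule AE_I'[of N'])
    show "N' \<in> null_sets lebesgue" using N' negligible_iff_null_sets by blast
    show "{t \<in> space lebesgue. \<not> (t \<in> ?J \<longrightarrow> (\<exists>v. (?\<psi> has_vector_derivative v) (at t within ?J) \<and> v \<in> inflate H \<epsilon> (?\<psi> t)))} \<subseteq> N'"
      using der by blast
  qed
  show ?thesis
    unfolding is_solution_def using lac ae c0 by auto
qed

lemma abs_cont_on_cong:
  assumes ac: "abs_cont_on a b f" and eq: "\<And>s. s \<in> {a..b} \<Longrightarrow> f s = g s"
  shows "abs_cont_on a b g"
  unfolding abs_cont_on_def
proof (intro allI impI)
  fix e :: real assume e: "e > 0"
  obtain d where d: "d > 0" and dAC: "\<And>(n::nat) (l::nat \<Rightarrow> real) (r::nat \<Rightarrow> real).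
        (\<forall>k<n. a \<le> l k \<and> l k \<le> r k \<and> r k \<le> b) \<Longrightarrow>
        (\<forall>i<n. \<forall>j<n. i \<noteq> j \<longrightarrow> {l i<..<r i} \<inter> {l j<..<r j} = {}) \<Longrightarrow>
        (\<Sum>k<n. r k - l k) < d
        \<Longrightarrow> (\<Sum>k<n. norm (f (r k) - f (l k))) < e"
    using abs_cont_onD[OF ac e] by blast
  have "\<forall>(n::nat) (l::nat \<Rightarrow> real) (r::nat \<Rightarrow> real). (\<forall>k<n. a \<le> l k \<and> l k \<le> r k \<and> r k \<le> b) \<and>
       (\<forall>i<n. \<forall>j<n. i \<noteq> j \<longrightarrow> {l i<..<r i} \<inter> {l j<..<r j} = {}) \<and> (\<Sum>k<n. r k - l k) < d \<longrightarrow>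
       (\<Sum>k<n. norm (g (r k) - g (l k))) < e"
  proof (intro allI impI)
    fix n :: nat and l r :: "nat \<Rightarrow> real"
    assume h: "(\<forall>k<n. a \<le> l k \<and> l k \<le> r k \<and> r k \<le> b) \<and>
       (\<forall>i<n. \<forall>j<n. i \<noteq> j \<longrightarrow> {l i<..<r i} \<inter> {l j<..<r j} = {}) \<and> (\<Sum>k<n. r k - l k) < d"
    have h1: "\<forall>k<n. a \<le> l k \<and> l k \<le> r k \<and> r k \<le> b" using h by blast
    have h2: "\<forall>i<n. \<forall>j<n. i \<noteq> j \<longrightarrow> {l i<..<r i} \<inter> {l j<..<r j} = {}" using h by blast
    have h3: "(\<Sum>k<n. r k - l k) < d" using h by blast
    have "(\<Sum>k<n. norm (f (r k) - f (l k))) = (\<Sum>k<n. norm (g (r k) - g (l k)))"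
    proof (rule sum.cong)
      fix k assume "k \<in> {..<n}"
      then have "l k \<in> {a..b}" "r k \<in> {a..b}" using h1 by auto
      then show "norm (f (r k) - f (l k)) = norm (g (r k) - g (l k))" using eq by simp
    qed simp
    then show "(\<Sum>k<n. norm (g (r k) - g (l k))) < e" using dAC[OF h1 h2 h3] by simp
  qed
  then show "\<exists>d>0. \<forall>(n::nat) (l::nat \<Rightarrow> real) (r::nat \<Rightarrow> real). (\<forall>k<n. a \<le> l k \<and> l k \<le> r k \<and> r k \<le> b) \<and>
       (\<forall>i<n. \<forall>j<n. i \<noteq> j \<longrightarrow> {l i<..<r i} \<inter> {l j<..<r j} = {}) \<and> (\<Sum>k<n. r k - l k) < d \<longrightarrow>
       (\<Sum>k<n. norm (g (r k) - g (l k))) < e"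
    using d by blast
qed

lemma is_solution_cong:
  assumes sol: "is_solution G I \<phi>" and eq: "\<And>s. s \<in> I \<Longrightarrow> \<phi> s = \<psi> s"
  shows "is_solution G I \<psi>"
proof -
  have lac: "loc_abs_cont_on I \<psi>"
    unfolding loc_abs_cont_on_def
  proof (intro allI impI)
    fix a b assume ab: "{a..b} \<subseteq> I"
    have "abs_cont_on a b \<phi>" using sol ab unfolding is_solution_def loc_abs_cont_on_def by blast
    then show "abs_cont_on a b \<psi>" using abs_cont_on_cong eq ab by blast
  qed
  obtain N where N: "negligible N"
    "\<And>t. t \<in> I - N \<Longrightarrow> \<exists>v. (\<phi> has_vector_derivative v) (at t within I) \<and> v \<in> G (\<phi> t)"
    using solution_null[OF sol] by blast
  have der: "\<exists>v. (\<psi> has_vector_derivative v) (at t within I) \<and> v \<in> G (\<psi> t)" if t: "t \<in> I - N" for t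
  proof -
    obtain v where v: "(\<phi> has_vector_derivative v) (at t within I)" "v \<in> G (\<phi> t)" using N(2)[OF t] by blast
    have "(\<psi> has_vector_derivative v) (at t within I)"
      by (rule has_vector_derivative_transform_within[OF v(1), of 1]) (use t eq in auto)
    then show ?thesis using v(2) eq t by auto
  qed
  have ae: "AE t in lebesgue. t \<in> I \<longrightarrow> (\<exists>v. (\<psi> has_vector_derivative v) (at t within I) \<and> v \<in> G (\<psi> t))"
  proof (rule AE_I'[of N])
    show "N \<in> null_sets lebesgue" using N(1) negligible_iff_null_sets by blast
    show "{t \<in> space lebesgue. \<not> (t \<in> I \<longrightarrow> (\<exists>v. (\<psi> has_vector_derivative v) (at t within I) \<and> v \<in> G (\<psi> t)))} \<subseteq> N"
      using der by blast
  qed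
  show ?thesis using sol lac ae unfolding is_solution_def by blast
qed

definition graph :: "real set \<Rightarrow> (real \<Rightarrow> 'a) \<Rightarrow> (real \<times> 'a) set" where
  "graph I \<phi> = (\<lambda>s. (s, \<phi> s)) ` I"

lemma graph_subset_iff: "graph I \<phi> \<subseteq> graph J \<psi> \<longleftrightarrow> I \<subseteq> J \<and> (\<forall>s\<in>I. \<psi> s = \<phi> s)"
  unfolding graph_def by auto

lemma fst_graph: "fst ` graph I \<phi> = I"
  unfolding graph_def by force

definition gfun :: "(real \<times> 'a) set \<Rightarrow> real \<Rightarrow> 'a" where
  "gfun X s = (SOME y. (s,y) \<in> X)"

lemma graph_eq_mem: "X = graph I \<phi> \<Longrightarrow> (s,y) \<in> X \<Longrightarrow> y = \<phi> s"
  unfolding graph_def by auto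

lemma gfun_graph: "s \<in> I \<Longrightarrow> gfun (graph I \<phi>) s = \<phi> s"
  unfolding gfun_def graph_def by auto

lemma chain_union_solution:
  fixes G :: "'a::euclidean_space \<Rightarrow> 'a set"
  assumes C: "C \<noteq> {}" "\<And>X Y. X \<in> C \<Longrightarrow> Y \<in> C \<Longrightarrow> X \<subseteq> Y \<or> Y \<subseteq> X"
    and sols: "\<And>X. X \<in> C \<Longrightarrow> \<exists>I \<phi>. X = graph I \<phi> \<and> is_solution G I \<phi>"
  shows "\<exists>I \<phi>. \<Union>C = graph I \<phi> \<and> is_solution G I \<phi>"
proof -
  define U where "U = \<Union>C"
  define IU where "IU = fst ` U"
  define \<phi>U where "\<phi>U = gfun U"
  have Xsol: "X = graph (fst ` X) (gfun X) \<and> is_solution G (fst ` X) (gfun X)" if XC: "X \<in> C" for X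
  proof -
    obtain I \<phi> where I\<phi>: "X = graph I \<phi>" "is_solution G I \<phi>" using sols[OF XC] by blast
    have fX: "fst ` X = I" using I\<phi>(1) fst_graph by blast
    have gX: "gfun X s = \<phi> s" if "s \<in> I" for s using gfun_graph[OF that] I\<phi>(1) by simp
    have "graph (fst ` X) (gfun X) = graph I \<phi>" unfolding graph_def fX using gX by auto
    moreover have "is_solution G (fst ` X) (gfun X)"
      unfolding fX using is_solution_cong[OF I\<phi>(2), of "gfun X"] gX by simp
    ultimately show ?thesis using I\<phi>(1) by simp
  qed
  have uniq: "y1 = y2" if h: "(s,y1) \<in> U" "(s,y2) \<in> U" for s y1 y2
  proof -
    obtain X1 X2 where X: "X1 \<in> C" "X2 \<in> C" "(s,y1) \<in> X1" "(s,y2) \<in> X2" using h unfolding U_def by blast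
    show ?thesis
    proof (cases "X1 \<subseteq> X2")
      case True
      then have "(s,y1) \<in> X2" using X by blast
      have e: "X2 = graph (fst ` X2) (gfun X2)" using Xsol[OF X(2)] by blast
      show ?thesis using graph_eq_mem[OF e \<open>(s,y1) \<in> X2\<close>] graph_eq_mem[OF e X(4)] by simp
    next
      case False
      then have "X2 \<subseteq> X1" using C(2)[OF X(1,2)] by blast
      then have "(s,y2) \<in> X1" using X by blast
      have e: "X1 = graph (fst ` X1) (gfun X1)" using Xsol[OF X(1)] by blast
      show ?thesis using graph_eq_mem[OF e \<open>(s,y2) \<in> X1\<close>] graph_eq_mem[OF e X(3)] by simp
    qed
  qed
  have \<phi>U: "\<phi>U s = y" if sy: "(s,y) \<in> U" for s y
  proof -
    have "(s, SOME y. (s,y) \<in> U) \<in> U" by (rule someI[of _ y]) (rule sy)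
    then show ?thesis unfolding \<phi>U_def gfun_def using uniq sy by blast
  qed
  have Ugraph: "U = graph IU \<phi>U"
  proof
    show "U \<subseteq> graph IU \<phi>U"
    proof
      fix p assume pU: "p \<in> U"
      obtain s y where p: "p = (s,y)" by fastforce
      have "\<phi>U s = y" using \<phi>U pU p by blast
      moreover have "s \<in> IU" using pU p unfolding IU_def by (metis fst_conv image_eqI)
      ultimately show "p \<in> graph IU \<phi>U" unfolding graph_def using p by blast
    qed
    show "graph IU \<phi>U \<subseteq> U"
    proof
      fix p assume "p \<in> graph IU \<phi>U"
      then obtain s where s: "s \<in> IU" "p = (s, \<phi>U s)" unfolding graph_def by blast
      then obtain y where y: "(s,y) \<in> U" unfolding IU_def by force
      then have "\<phi>U s = y" using \<phi>U by blast
      then show "p \<in> U" using s(2) y by simp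
    qed
  qed
  have XU: "fst ` X \<subseteq> IU \<and> (\<forall>s\<in>fst ` X. \<phi>U s = gfun X s)" if "X \<in> C" for X
  proof -
    have "X \<subseteq> U" using that unfolding U_def by blast
    then have "graph (fst ` X) (gfun X) \<subseteq> graph IU \<phi>U" using Xsol[OF that] Ugraph by simp
    then show ?thesis unfolding graph_subset_iff by simp
  qed
  have common: "\<exists>X\<in>C. a \<in> fst ` X \<and> b \<in> fst ` X" if h: "a \<in> IU" "b \<in> IU" for a b
  proof -
    obtain X1 X2 where X: "X1 \<in> C" "X2 \<in> C" "a \<in> fst ` X1" "b \<in> fst ` X2"
      using h unfolding IU_def U_def by blast
    show ?thesis
    proof (cases "X1 \<subseteq> X2")
      case True then show ?thesis using X by blast
    next
      case False
      then have "X2 \<subseteq> X1" using C(2)[OF X(1,2)] by blast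
      then show ?thesis using X by blast
    qed
  qed
  have Xint: "is_interval (fst ` X)" if "X \<in> C" for X
    using Xsol[OF that] unfolding is_solution_def by blast
  have intU: "is_interval IU"
    unfolding is_interval_1
  proof (intro ballI allI impI)
    fix a b x assume a: "a \<in> IU" and b: "b \<in> IU" and x: "a \<le> x \<and> x \<le> b"
    obtain X where X: "X \<in> C" "a \<in> fst ` X" "b \<in> fst ` X" using common[OF a b] by blast
    have "x \<in> fst ` X" using Xint[OF X(1)] X(2,3) x unfolding is_interval_1 by blast
    then show "x \<in> IU" using XU[OF X(1)] by blast
  qed
  have zero: "0 \<in> IU"
  proof -
    obtain X where X: "X \<in> C" using C(1) by blast
    have "0 \<in> fst ` X" using Xsol[OF X] unfolding is_solution_def by blast
    then show ?thesis using XU[OF X] by blast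
  qed
  have sub_common: "\<exists>X\<in>C. {a..b} \<subseteq> fst ` X" if h: "a \<in> IU" "b \<in> IU" for a b
  proof -
    obtain X where X: "X \<in> C" "a \<in> fst ` X" "b \<in> fst ` X" using common[OF h] by blast
    have "{a..b} \<subseteq> fst ` X" using Xint[OF X(1)] X(2,3) unfolding is_interval_1 by auto
    then show ?thesis using X(1) by blast
  qed
  have lac: "loc_abs_cont_on IU \<phi>U"
    unfolding loc_abs_cont_on_def
  proof (intro allI impI)
    fix a b assume ab: "{a..b} \<subseteq> IU"
    show "abs_cont_on a b \<phi>U"
    proof (cases "b < a")
      case True then show ?thesis by (rule abs_cont_on_empty)
    next
      case False
      then have "a \<in> IU" "b \<in> IU" using ab by auto
      then obtain X where X: "X \<in> C" "{a..b} \<subseteq> fst ` X" using sub_common by blast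
      have "abs_cont_on a b (gfun X)"
        using Xsol[OF X(1)] X(2) unfolding is_solution_def loc_abs_cont_on_def by blast
      moreover have "gfun X s = \<phi>U s" if sab: "s \<in> {a..b}" for s
      proof -
        have sX: "s \<in> fst ` X" using X(2) sab by blast
        have "\<forall>s\<in>fst ` X. \<phi>U s = gfun X s" using XU[OF X(1)] by blast
        then have "\<phi>U s = gfun X s" using sX by (rule bspec)
        then show ?thesis by simp
      qed
      ultimately show ?thesis by (rule abs_cont_on_cong)
    qed
  qed
  define Q where "Q = {q. fst q \<in> \<rat> \<and> snd q \<in> \<rat> \<and> fst q \<in> IU \<and> snd q \<in> IU}"
  have cQ: "countable Q"
  proof -
    have "Q \<subseteq> \<rat> \<times> \<rat>" unfolding Q_def by auto
    moreover have "countable (\<rat> \<times> \<rat>)" by (intro countable_SIGMA countable_rat)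
    ultimately show ?thesis by (rule countable_subset)
  qed
  define Xq where "Xq q = (SOME X. X \<in> C \<and> {fst q..snd q} \<subseteq> fst ` X)" for q
  have Xq: "Xq q \<in> C \<and> {fst q..snd q} \<subseteq> fst ` (Xq q)" if "q \<in> Q" for q
  proof -
    have "\<exists>X. X \<in> C \<and> {fst q..snd q} \<subseteq> fst ` X" using sub_common[of "fst q" "snd q"] that unfolding Q_def by blast
    then show ?thesis unfolding Xq_def by (rule someI_ex)
  qed
  define NX where "NX X = (SOME N. negligible N \<and> (\<forall>t\<in>fst ` X - N. \<exists>v. (gfun X has_vector_derivative v) (at t within fst ` X) \<and> v \<in> G (gfun X t)))" for X
  have NX: "negligible (NX X) \<and> (\<forall>t\<in>fst ` X - NX X. \<exists>v. (gfun X has_vector_derivative v) (at t within fst ` X) \<and> v \<in> G (gfun X t))"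
    if XC: "X \<in> C" for X
  proof -
    obtain N where "negligible N"
      "\<And>t. t \<in> fst ` X - N \<Longrightarrow> \<exists>v. (gfun X has_vector_derivative v) (at t within fst ` X) \<and> v \<in> G (gfun X t)"
      using solution_null[of G "fst ` X" "gfun X"] Xsol[OF XC] by blast
    then have "\<exists>N. negligible N \<and> (\<forall>t\<in>fst ` X - N. \<exists>v. (gfun X has_vector_derivative v) (at t within fst ` X) \<and> v \<in> G (gfun X t))"
      by blast
    then show ?thesis unfolding NX_def by (rule someI_ex)
  qed
  define E where "E = {Inf IU, Sup IU}"
  define N where "N = E \<union> \<Union>((\<lambda>q. NX (Xq q)) ` Q)"
  have negN: "negligible N"
    unfolding N_def E_def
  proof (rule negligible_Un)
    show "negligible {Inf IU, Sup IU}" by (rule negligible_finite) simp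
    show "negligible (\<Union>((\<lambda>q. NX (Xq q)) ` Q))"
    proof (rule negligible_countable_Union)
      show "countable ((\<lambda>q. NX (Xq q)) ` Q)" using cQ by (rule countable_image)
      show "negligible S" if SQ: "S \<in> (\<lambda>q. NX (Xq q)) ` Q" for S
      proof -
        obtain q where q: "q \<in> Q" "S = NX (Xq q)" using SQ by blast
        have "Xq q \<in> C" using Xq[OF q(1)] by blast
        then show ?thesis using NX q(2) by blast
      qed
    qed
  qed
  have der: "\<exists>v. (\<phi>U has_vector_derivative v) (at t within IU) \<and> v \<in> G (\<phi>U t)" if t: "t \<in> IU" "t \<notin> N" for t
  proof -
    have tE: "t \<noteq> Inf IU" "t \<noteq> Sup IU" using t unfolding N_def E_def by auto
    have "\<not> (\<forall>s\<in>IU. t \<le> s)"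
    proof
      assume h: "\<forall>s\<in>IU. t \<le> s"
      have "Inf IU = t" using t(1) h by (intro cInf_eq_minimum) auto
      then show False using tE by simp
    qed
    then obtain t1 where t1: "t1 \<in> IU" "t1 < t" by (auto simp: not_le)
    have "\<not> (\<forall>s\<in>IU. s \<le> t)"
    proof
      assume h: "\<forall>s\<in>IU. s \<le> t"
      have "Sup IU = t" using t(1) h by (intro cSup_eq_maximum) auto
      then show False using tE by simp
    qed
    then obtain t2 where t2: "t2 \<in> IU" "t < t2" by (auto simp: not_le)
    obtain q1 where q1: "q1 \<in> \<rat>" "t1 < q1" "q1 < t" using Rats_dense_in_real[OF t1(2)] by blast
    obtain q2 where q2: "q2 \<in> \<rat>" "t < q2" "q2 < t2" using Rats_dense_in_real[OF t2(2)] by blast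
    have iu: "\<And>a b x. a \<in> IU \<Longrightarrow> b \<in> IU \<Longrightarrow> a \<le> x \<Longrightarrow> x \<le> b \<Longrightarrow> x \<in> IU"
      using intU unfolding is_interval_1 by blast
    have q12: "q1 \<in> IU" "q2 \<in> IU"
      using iu[OF t1(1) t(1), of q1] iu[OF t(1) t2(1), of q2] q1 q2 by auto
    define q where "q = (q1,q2)"
    have qQ: "q \<in> Q" unfolding Q_def q_def using q1 q2 q12 by simp
    define X where "X = Xq q"
    have X: "X \<in> C" "{q1..q2} \<subseteq> fst ` X" using Xq[OF qQ] unfolding X_def q_def by auto
    have tX: "t \<in> fst ` X" using X(2) q1 q2 by auto
    have tNX: "t \<notin> NX X" using t(2) qQ unfolding N_def X_def by blast
    obtain v where v: "(gfun X has_vector_derivative v) (at t within fst ` X)" "v \<in> G (gfun X t)"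
      using NX[OF X(1)] tX tNX by blast
    have v1: "(gfun X has_vector_derivative v) (at t within {q1<..<q2})"
    proof (rule has_vector_derivative_within_subset[OF v(1)])
      show "{q1<..<q2} \<subseteq> fst ` X" using X(2) by auto
    qed
    have tin: "t \<in> {q1<..<q2}" using q1 q2 by auto
    have v2: "(gfun X has_vector_derivative v) (at t)"
      using v1 at_within_open[OF tin open_greaterThanLessThan] by simp
    have eqX: "gfun X y = \<phi>U y" if yin: "y \<in> {q1<..<q2}" for y
    proof -
      have yX: "y \<in> fst ` X" using X(2) yin by auto
      have "\<forall>s\<in>fst ` X. \<phi>U s = gfun X s" using XU[OF X(1)] by blast
      then have "\<phi>U y = gfun X y" using yX by (rule bspec)
      then show ?thesis by simp
    qed
    have v3: "(\<phi>U has_vector_derivative v) (at t)"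
      by (rule has_vector_derivative_transform_within_open[OF v2 _ tin eqX]) simp
    have "\<phi>U t = gfun X t" using eqX tin by simp
    then show ?thesis using has_vector_derivative_at_within[OF v3] v(2) by auto
  qed
  have ae: "AE t in lebesgue. t \<in> IU \<longrightarrow> (\<exists>v. (\<phi>U has_vector_derivative v) (at t within IU) \<and> v \<in> G (\<phi>U t))"
  proof (rule AE_I'[of N])
    show "N \<in> null_sets lebesgue" using negN negligible_iff_null_sets by blast
    show "{t \<in> space lebesgue. \<not> (t \<in> IU \<longrightarrow> (\<exists>v. (\<phi>U has_vector_derivative v) (at t within IU) \<and> v \<in> G (\<phi>U t)))} \<subseteq> N"
      using der by blast
  qed
  have "is_solution G IU \<phi>U" unfolding is_solution_def using intU zero lac ae by blast
  with Ugraph have "U = graph IU \<phi>U \<and> is_solution G IU \<phi>U" by (rule conjI)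
  then have "\<exists>I \<phi>. U = graph I \<phi> \<and> is_solution G I \<phi>" by blast
  then show ?thesis unfolding U_def .
qed

lemma extend_maximal:
  fixes G :: "'a::euclidean_space \<Rightarrow> 'a set"
  assumes sol: "is_solution G J \<psi>"
  shows "\<exists>I \<phi>. is_maximal_solution G I \<phi> \<and> J \<subseteq> I \<and> (\<forall>s\<in>J. \<phi> s = \<psi> s)"
proof -
  define A where "A = {X. \<exists>I \<phi>. X = graph I \<phi> \<and> is_solution G I \<phi> \<and> graph J \<psi> \<subseteq> X}"
  have "\<forall>C\<in>chains A. \<exists>U\<in>A. \<forall>X\<in>C. X \<subseteq> U"
  proof
    fix C assume C: "C \<in> chains A"
    show "\<exists>U\<in>A. \<forall>X\<in>C. X \<subseteq> U"
    proof (cases "C = {}")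
      case True
      have "graph J \<psi> \<in> A" unfolding A_def using sol by blast
      then show ?thesis using True by blast
    next
      case False
      have CA: "C \<subseteq> A" using chainsD2[OF C] .
      have ch: "\<And>X Y. X \<in> C \<Longrightarrow> Y \<in> C \<Longrightarrow> X \<subseteq> Y \<or> Y \<subseteq> X" using chainsD[OF C] by blast
      have sols: "\<And>X. X \<in> C \<Longrightarrow> \<exists>I \<phi>. X = graph I \<phi> \<and> is_solution G I \<phi>" using CA unfolding A_def by blast
      note cu = chain_union_solution[OF False ch sols]
      have "graph J \<psi> \<subseteq> \<Union>C" using CA False unfolding A_def by blast
      then have "\<Union>C \<in> A" unfolding A_def using cu by blast
      then show ?thesis by blast
    qed
  qed
  from Zorn_Lemma2[OF this] obtain M where M: "M \<in> A" "\<And>X. X \<in> A \<Longrightarrow> M \<subseteq> X \<Longrightarrow> X = M" by blast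
  obtain I \<phi> where I\<phi>: "M = graph I \<phi>" "is_solution G I \<phi>" "graph J \<psi> \<subseteq> M" using M(1) unfolding A_def by blast
  have JI: "J \<subseteq> I \<and> (\<forall>s\<in>J. \<phi> s = \<psi> s)" using I\<phi>(3) unfolding I\<phi>(1) graph_subset_iff by simp
  have "is_maximal_solution G I \<phi>"
    unfolding is_maximal_solution_def
  proof (intro conjI I\<phi>(2) notI)
    assume "\<exists>J' \<psi>'. is_solution G J' \<psi>' \<and> I \<subset> J' \<and> (\<forall>s\<in>I. \<psi>' s = \<phi> s)"
    then obtain J' \<psi>' where J': "is_solution G J' \<psi>'" "I \<subset> J'" "\<forall>s\<in>I. \<psi>' s = \<phi> s" by blast
    have sub: "M \<subseteq> graph J' \<psi>'" using J'(2,3) unfolding I\<phi>(1) graph_subset_iff by auto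
    then have "graph J' \<psi>' \<in> A" unfolding A_def using J'(1) I\<phi>(3) by blast
    then have "graph J' \<psi>' = M" using M(2) sub by blast
    then have "fst ` graph J' \<psi>' = fst ` graph I \<phi>" using I\<phi>(1) by simp
    then have "J' = I" unfolding fst_graph .
    then show False using J'(2) by blast
  qed
  then show ?thesis using JI by blast
qed

lemma abs_cont_reflect:
  assumes ac: "abs_cont_on a b \<phi>"
  shows "abs_cont_on (-b) (-a) (\<lambda>s. \<phi> (-s))"
  unfolding abs_cont_on_def
proof (intro allI impI)
  fix e :: real assume e: "e > 0"
  obtain d where d: "d > 0" and dAC: "\<And>(n::nat) (l::nat \<Rightarrow> real) (r::nat \<Rightarrow> real).
        (\<forall>k<n. a \<le> l k \<and> l k \<le> r k \<and> r k \<le> b) \<Longrightarrow>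
        (\<forall>i<n. \<forall>j<n. i \<noteq> j \<longrightarrow> {l i<..<r i} \<inter> {l j<..<r j} = {}) \<Longrightarrow>
        (\<Sum>k<n. r k - l k) < d
        \<Longrightarrow> (\<Sum>k<n. norm (\<phi> (r k) - \<phi> (l k))) < e"
    using abs_cont_onD[OF ac e] by blast
  have "\<forall>(n::nat) (l::nat \<Rightarrow> real) (r::nat \<Rightarrow> real). (\<forall>k<n. -b \<le> l k \<and> l k \<le> r k \<and> r k \<le> -a) \<and>
       (\<forall>i<n. \<forall>j<n. i \<noteq> j \<longrightarrow> {l i<..<r i} \<inter> {l j<..<r j} = {}) \<and> (\<Sum>k<n. r k - l k) < d \<longrightarrow>
       (\<Sum>k<n. norm (\<phi> (- r k) - \<phi> (- l k))) < e"
  proof (intro allI impI)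
    fix n :: nat and l r :: "nat \<Rightarrow> real"
    assume h: "(\<forall>k<n. -b \<le> l k \<and> l k \<le> r k \<and> r k \<le> -a) \<and>
       (\<forall>i<n. \<forall>j<n. i \<noteq> j \<longrightarrow> {l i<..<r i} \<inter> {l j<..<r j} = {}) \<and> (\<Sum>k<n. r k - l k) < d"
    have h1: "\<forall>k<n. a \<le> - r k \<and> - r k \<le> - l k \<and> - l k \<le> b"
    proof (intro allI impI)
      fix k assume "k < n"
      then have "-b \<le> l k \<and> l k \<le> r k \<and> r k \<le> -a" using h by blast
      then show "a \<le> - r k \<and> - r k \<le> - l k \<and> - l k \<le> b" by linarith
    qed
    have h2: "\<forall>i<n. \<forall>j<n. i \<noteq> j \<longrightarrow> {- r i<..<- l i} \<inter> {- r j<..<- l j} = {}"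
    proof (intro allI impI)
      fix i j assume ij: "i < n" "j < n" "i \<noteq> j"
      have "{l i<..<r i} \<inter> {l j<..<r j} = {}" using h ij by blast
      then show "{- r i<..<- l i} \<inter> {- r j<..<- l j} = {}"
        by (auto simp: disjoint_iff)
    qed
    have h3: "(\<Sum>k<n. (- l k) - (- r k)) < d" using h by simp
    have "(\<Sum>k<n. norm (\<phi> (- l k) - \<phi> (- r k))) < e" by (rule dAC[OF h1 h2 h3])
    then show "(\<Sum>k<n. norm (\<phi> (- r k) - \<phi> (- l k))) < e" by (simp add: norm_minus_commute)
  qed
  then show "\<exists>d>0. \<forall>(n::nat) (l::nat \<Rightarrow> real) (r::nat \<Rightarrow> real). (\<forall>k<n. -b \<le> l k \<and> l k \<le> r k \<and> r k \<le> -a) \<and>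
       (\<forall>i<n. \<forall>j<n. i \<noteq> j \<longrightarrow> {l i<..<r i} \<inter> {l j<..<r j} = {}) \<and> (\<Sum>k<n. r k - l k) < d \<longrightarrow>
       (\<Sum>k<n. norm (\<phi> (- r k) - \<phi> (- l k))) < e"
    using d by blast
qed

lemma rev_solution:
  fixes \<phi> :: "real \<Rightarrow> 'a::euclidean_space"
  assumes sol: "is_solution G I \<phi>"
  shows "is_solution (\<lambda>z. uminus ` G z) (uminus ` I) (\<lambda>s. \<phi> (-s))"
proof -
  have int: "is_interval (uminus ` I)" using sol unfolding is_solution_def by simp
  have zero: "0 \<in> uminus ` I" using sol unfolding is_solution_def by force
  have lac: "loc_abs_cont_on (uminus ` I) (\<lambda>s. \<phi> (-s))"
    unfolding loc_abs_cont_on_def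
  proof (intro allI impI)
    fix a b assume ab: "{a..b} \<subseteq> uminus ` I"
    have "{-b..-a} \<subseteq> I"
    proof
      fix x assume "x \<in> {-b..-a}"
      then have "-x \<in> {a..b}" by auto
      then have "-x \<in> uminus ` I" using ab by blast
      then show "x \<in> I" by force
    qed
    then have "abs_cont_on (-b) (-a) \<phi>" using sol unfolding is_solution_def loc_abs_cont_on_def by blast
    from abs_cont_reflect[OF this] show "abs_cont_on a b (\<lambda>s. \<phi> (-s))" by simp
  qed
  obtain N where N: "negligible N"
    "\<And>t. t \<in> I - N \<Longrightarrow> \<exists>v. (\<phi> has_vector_derivative v) (at t within I) \<and> v \<in> G (\<phi> t)"
    using solution_null[OF sol] by blast
  have N': "negligible (uminus ` N)"
  proof (rule negligible_differentiable_image_negligible)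
    show "DIM(real) \<le> DIM(real)" by simp
    show "negligible N" using N(1) .
    show "uminus differentiable_on N" by (intro derivative_intros)
  qed
  have img: "uminus ` uminus ` I = I" by (simp add: image_image)
  have der: "\<exists>v. ((\<lambda>s. \<phi> (-s)) has_vector_derivative v) (at t within uminus ` I) \<and> v \<in> uminus ` G (\<phi> (-t))"
    if t: "t \<in> uminus ` I" "t \<notin> uminus ` N" for t
  proof -
    have "-t \<in> I" "-t \<notin> N" using t by force+
    then obtain v where v: "(\<phi> has_vector_derivative v) (at (-t) within I)" "v \<in> G (\<phi> (-t))"
      using N(2) by blast
    have v2: "(\<phi> has_vector_derivative v) (at (uminus t) within uminus ` uminus ` I)"
      using v(1) img by simp
    have sh: "(uminus has_vector_derivative (-1)) (at t within uminus ` I)"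
      by (auto intro!: derivative_eq_intros)
    have "((\<phi> \<circ> uminus) has_vector_derivative ((-1) *\<^sub>R v)) (at t within uminus ` I)"
      by (rule vector_diff_chain_within[OF sh v2])
    then have "((\<lambda>s. \<phi> (-s)) has_vector_derivative (- v)) (at t within uminus ` I)"
      by (simp add: o_def)
    moreover have "- v \<in> uminus ` G (\<phi> (-t))" using v(2) by blast
    ultimately show ?thesis by blast
  qed
  have ae: "AE t in lebesgue. t \<in> uminus ` I \<longrightarrow> (\<exists>v. ((\<lambda>s. \<phi> (-s)) has_vector_derivative v) (at t within uminus ` I) \<and> v \<in> uminus ` G (\<phi> (-t)))"
  proof (rule AE_I'[of "uminus ` N"])
    show "uminus ` N \<in> null_sets lebesgue" using N' negligible_iff_null_sets by blast
    show "{t \<in> space lebesgue. \<not> (t \<in> uminus ` I \<longrightarrow> (\<exists>v. ((\<lambda>s. \<phi> (-s)) has_vector_derivative v) (at t within uminus ` I) \<and> v \<in> uminus ` G (\<phi> (-t))))} \<subseteq> uminus ` N"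
      using der by blast
  qed
  show ?thesis unfolding is_solution_def using int zero lac ae by blast
qed

lemma rev_maximal:
  fixes \<phi> :: "real \<Rightarrow> 'a::euclidean_space"
  assumes m: "is_maximal_solution G I \<phi>"
  shows "is_maximal_solution (\<lambda>z. uminus ` G z) (uminus ` I) (\<lambda>s. \<phi> (-s))"
  unfolding is_maximal_solution_def
proof (intro conjI notI)
  have sol: "is_solution G I \<phi>" using m unfolding is_maximal_solution_def by blast
  show "is_solution (\<lambda>z. uminus ` G z) (uminus ` I) (\<lambda>s. \<phi> (-s))" by (rule rev_solution[OF sol])
  assume "\<exists>J \<psi>. is_solution (\<lambda>z. uminus ` G z) J \<psi> \<and> uminus ` I \<subset> J \<and> (\<forall>s\<in>uminus ` I. \<psi> s = \<phi> (-s))"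
  then obtain J \<psi> where J: "is_solution (\<lambda>z. uminus ` G z) J \<psi>" "uminus ` I \<subset> J" "\<forall>s\<in>uminus ` I. \<psi> s = \<phi> (-s)"
    by blast
  have "is_solution (\<lambda>z. uminus ` uminus ` G z) (uminus ` J) (\<lambda>s. \<psi> (-s))" by (rule rev_solution[OF J(1)])
  then have s2: "is_solution G (uminus ` J) (\<lambda>s. \<psi> (-s))" by (simp add: image_image)
  have "uminus ` uminus ` I \<subset> uminus ` J" using J(2) by (metis image_strict_mono inj_on_def neg_equal_iff_equal subset_UNIV inj_def)
  then have s3: "I \<subset> uminus ` J" by (simp add: image_image)
  have s4: "\<forall>s\<in>I. \<psi> (-s) = \<phi> s" using J(3) by force
  show False using m s2 s3 s4 unfolding is_maximal_solution_def by blast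
qed

lemma Rb_rev:
  fixes G :: "'a::euclidean_space \<Rightarrow> 'a set"
  assumes t: "t > 0"
  shows "Rb G (-t) y = Rb (\<lambda>z. uminus ` G z) t y"
proof -
  let ?G' = "\<lambda>z. uminus ` G z"
  have GG: "(\<lambda>z. uminus ` ?G' z) = G" by (simp add: image_image)
  have L: "Rb G (-t) y = {\<phi> s | I \<phi> s. (I, \<phi>) \<in> max_sols G y \<and> s \<in> I \<inter> {-t..0} \<and> \<not> (\<exists>s'\<in>{-t..0} \<inter> I. s' < s)}"
    unfolding Rb_def using t by simp
  have R: "Rb ?G' t y = {\<phi> s | I \<phi> s. (I, \<phi>) \<in> max_sols ?G' y \<and> s \<in> I \<inter> {0..t} \<and> \<not> (\<exists>s'\<in>{0..t} \<inter> I. s' > s)}"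
    unfolding Rb_def using t by simp
  show ?thesis
    unfolding L R
  proof
    show "{\<phi> s | I \<phi> s. (I, \<phi>) \<in> max_sols G y \<and> s \<in> I \<inter> {-t..0} \<and> \<not> (\<exists>s'\<in>{-t..0} \<inter> I. s' < s)}
      \<subseteq> {\<phi> s | I \<phi> s. (I, \<phi>) \<in> max_sols ?G' y \<and> s \<in> I \<inter> {0..t} \<and> \<not> (\<exists>s'\<in>{0..t} \<inter> I. s' > s)}"
    proof
      fix z assume "z \<in> {\<phi> s | I \<phi> s. (I, \<phi>) \<in> max_sols G y \<and> s \<in> I \<inter> {-t..0} \<and> \<not> (\<exists>s'\<in>{-t..0} \<inter> I. s' < s)}"
      then obtain I \<phi> s where h: "z = \<phi> s" "(I, \<phi>) \<in> max_sols G y" "s \<in> I \<inter> {-t..0}" "\<not> (\<exists>s'\<in>{-t..0} \<inter> I. s' < s)"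
        by blast
      have m: "is_maximal_solution G I \<phi>" "\<phi> 0 = y" using h(2) unfolding max_sols_def by auto
      have "(uminus ` I, \<lambda>s. \<phi> (-s)) \<in> max_sols ?G' y"
        unfolding max_sols_def using rev_maximal[OF m(1)] m(2) by simp
      moreover have "-s \<in> uminus ` I \<inter> {0..t}" using h(3) by auto
      moreover have "\<not> (\<exists>s'\<in>{0..t} \<inter> uminus ` I. s' > -s)"
      proof
        assume "\<exists>s'\<in>{0..t} \<inter> uminus ` I. s' > -s"
        then obtain s' where "s' \<in> {0..t}" "s' \<in> uminus ` I" "s' > -s" by blast
        then have "-s' \<in> {-t..0} \<inter> I" "-s' < s" by force+
        then show False using h(4) by blast
      qed
      moreover have "z = (\<lambda>s. \<phi> (-s)) (-s)" using h(1) by simp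
      ultimately have "\<exists>I' \<phi>' s'. z = \<phi>' s' \<and> (I', \<phi>') \<in> max_sols ?G' y \<and> s' \<in> I' \<inter> {0..t} \<and> \<not> (\<exists>s''\<in>{0..t} \<inter> I'. s'' > s')"
        by (intro exI[of _ "uminus ` I"] exI[of _ "\<lambda>s. \<phi> (-s)"] exI[of _ "-s"]) blast
      then show "z \<in> {\<phi> s | I \<phi> s. (I, \<phi>) \<in> max_sols ?G' y \<and> s \<in> I \<inter> {0..t} \<and> \<not> (\<exists>s'\<in>{0..t} \<inter> I. s' > s)}"
        unfolding mem_Collect_eq .
    qed
    show "{\<phi> s | I \<phi> s. (I, \<phi>) \<in> max_sols ?G' y \<and> s \<in> I \<inter> {0..t} \<and> \<not> (\<exists>s'\<in>{0..t} \<inter> I. s' > s)}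
      \<subseteq> {\<phi> s | I \<phi> s. (I, \<phi>) \<in> max_sols G y \<and> s \<in> I \<inter> {-t..0} \<and> \<not> (\<exists>s'\<in>{-t..0} \<inter> I. s' < s)}"
    proof
      fix z assume "z \<in> {\<phi> s | I \<phi> s. (I, \<phi>) \<in> max_sols ?G' y \<and> s \<in> I \<inter> {0..t} \<and> \<not> (\<exists>s'\<in>{0..t} \<inter> I. s' > s)}"
      then obtain I \<phi> s where h: "z = \<phi> s" "(I, \<phi>) \<in> max_sols ?G' y" "s \<in> I \<inter> {0..t}" "\<not> (\<exists>s'\<in>{0..t} \<inter> I. s' > s)"
        by blast
      have m: "is_maximal_solution ?G' I \<phi>" "\<phi> 0 = y" using h(2) unfolding max_sols_def by auto
      have "is_maximal_solution (\<lambda>z. uminus ` ?G' z) (uminus ` I) (\<lambda>s. \<phi> (-s))" by (rule rev_maximal[OF m(1)])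
      then have "is_maximal_solution G (uminus ` I) (\<lambda>s. \<phi> (-s))" unfolding GG .
      then have "(uminus ` I, \<lambda>s. \<phi> (-s)) \<in> max_sols G y"
        unfolding max_sols_def using m(2) by simp
      moreover have "-s \<in> uminus ` I \<inter> {-t..0}" using h(3) by auto
      moreover have "\<not> (\<exists>s'\<in>{-t..0} \<inter> uminus ` I. s' < -s)"
      proof
        assume "\<exists>s'\<in>{-t..0} \<inter> uminus ` I. s' < -s"
        then obtain s' where "s' \<in> {-t..0}" "s' \<in> uminus ` I" "s' < -s" by blast
        then have "-s' \<in> {0..t} \<inter> I" "-s' > s" by force+
        then show False using h(4) by blast
      qed
      moreover have "z = (\<lambda>s. \<phi> (-s)) (-s)" using h(1) by simp
      ultimately have "\<exists>I' \<phi>' s'. z = \<phi>' s' \<and> (I', \<phi>') \<in> max_sols G y \<and> s' \<in> I' \<inter> {-t..0} \<and> \<not> (\<exists>s''\<in>{-t..0} \<inter> I'. s'' < s')"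
        by (intro exI[of _ "uminus ` I"] exI[of _ "\<lambda>s. \<phi> (-s)"] exI[of _ "-s"]) blast
      then show "z \<in> {\<phi> s | I \<phi> s. (I, \<phi>) \<in> max_sols G y \<and> s \<in> I \<inter> {-t..0} \<and> \<not> (\<exists>s'\<in>{-t..0} \<inter> I. s' < s)}"
        unfolding mem_Collect_eq .
    qed
  qed
qed

lemma inflate_reverse:
  "inflate (reverse F) eps = (\<lambda>z. uminus ` inflate F eps z)"
proof
  fix z
  show "inflate (reverse F) eps z = uminus ` inflate F eps z"
  proof
    show "inflate (reverse F) eps z \<subseteq> uminus ` inflate F eps z"
    proof
      fix x assume "x \<in> inflate (reverse F) eps z"
      then obtain u w where uw: "x = u + w" "u \<in> uminus ` F z" "w \<in> cball 0 (eps z)"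
        unfolding inflate_def reverse_def by blast
      then obtain u' where u': "u' \<in> F z" "u = - u'" by blast
      have "-w \<in> cball 0 (eps z)" using uw(3) by simp
      then have "u' + (-w) \<in> inflate F eps z" unfolding inflate_def using u'(1) by blast
      moreover have "x = - (u' + (-w))" using uw(1) u'(2) by simp
      ultimately show "x \<in> uminus ` inflate F eps z" by blast
    qed
    show "uminus ` inflate F eps z \<subseteq> inflate (reverse F) eps z"
    proof
      fix x assume "x \<in> uminus ` inflate F eps z"
      then obtain u w where uw: "x = - (u + w)" "u \<in> F z" "w \<in> cball 0 (eps z)"
        unfolding inflate_def by blast
      have "-u \<in> reverse F z" unfolding reverse_def using uw(2) by blast
      moreover have "-w \<in> cball 0 (eps z)" using uw(3) by simp
      moreover have "x = -u + -w" using uw(1) by simp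
      ultimately show "x \<in> inflate (reverse F) eps z" unfolding inflate_def by blast
    qed
  qed
qed

theorem lemma3:
  fixes F :: "real ^ 'n \<Rightarrow> (real ^ 'n) set"
  assumes "continuous_setmap F"
    and "\<And>x. F x \<noteq> {} \<and> compact (F x) \<and> convex (F x)"
    and "forward_complete F"
  shows "\<forall>x (eps :: real ^ 'n \<Rightarrow> real). continuous_on UNIV eps \<and> (\<forall>z. eps z > 0) \<longrightarrow>
           (\<exists>T>0. \<forall>t. 0 < t \<and> t \<le> T \<longrightarrow>
              (\<exists>\<delta>>0. \<forall>y \<in> Rb F t x - {x}.
                  cball y \<delta> \<subseteq> Rb (inflate F eps) t x \<and>
                  cball x \<delta> \<subseteq> Rb (inflate F eps) (-t) y \<and>
                  Rb (inflate F eps) (-t) y = Rb (inflate (reverse F) eps) t y))"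
proof (intro allI impI)
  fix x :: "real ^ 'n" and eps :: "real ^ 'n \<Rightarrow> real"
  assume epsH: "continuous_on UNIV eps \<and> (\<forall>z. eps z > 0)"
  have cpt: "\<And>z. compact (F z)" using assms(2) by blast
  have usc: "usc_setmap F" using assms(1) unfolding continuous_setmap_def by blast
  define K where "K = cball x 1"
  have Kc: "compact K" unfolding K_def by simp
  obtain M where M: "M > 0" "\<And>p v. p \<in> K \<Longrightarrow> v \<in> F p \<Longrightarrow> norm v \<le> M"
    using usc_bounded[OF usc cpt Kc] by blast
  obtain x0 where x0: "x0 \<in> K" "\<And>z. z \<in> K \<Longrightarrow> eps x0 \<le> eps z"
  proof -
    have "K \<noteq> {}" unfolding K_def by simp
    moreover have "continuous_on K eps" using epsH continuous_on_subset by blast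
    ultimately show thesis using continuous_attains_inf[OF Kc] that by blast
  qed
  define m where "m = eps x0"
  have m: "m > 0" "\<And>z. z \<in> K \<Longrightarrow> m \<le> eps z" using epsH x0 unfolding m_def by auto
  have m2: "m/2 > 0" using m(1) by simp
  obtain \<rho> where \<rho>: "\<rho> > 0" "\<And>p q v. p \<in> K \<Longrightarrow> dist p q < \<rho> \<Longrightarrow> v \<in> F p \<Longrightarrow> \<exists>u\<in>F q. dist v u < m/2"
    using unif_lsc[OF assms(1) cpt Kc m2] by blast
  define T where "T = 1 / (2 * M)"
  have T: "T > 0" "M * T = 1/2" using M(1) unfolding T_def by auto
  have "\<forall>t. 0 < t \<and> t \<le> T \<longrightarrow>
              (\<exists>\<delta>>0. \<forall>y \<in> Rb F t x - {x}.
                  cball y \<delta> \<subseteq> Rb (inflate F eps) t x \<and>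
                  cball x \<delta> \<subseteq> Rb (inflate F eps) (-t) y \<and>
                  Rb (inflate F eps) (-t) y = Rb (inflate (reverse F) eps) t y)"
  proof (intro allI impI)
    fix t :: real assume t: "0 < t \<and> t \<le> T"
    define \<delta> where "\<delta> = min (\<rho>/2) (min (t * m / 2) (1/4))"
    have \<delta>: "\<delta> > 0" "\<delta> < \<rho>" "\<delta> \<le> t * m / 2" "\<delta> \<le> 1/4"
      using \<rho>(1) m(1) t unfolding \<delta>_def by auto
    have \<delta>t: "\<delta> / t \<le> m / 2" using \<delta>(3) t by (simp add: divide_simps mult.commute)
    have "\<forall>y \<in> Rb F t x - {x}.
                  cball y \<delta> \<subseteq> Rb (inflate F eps) t x \<and>
                  cball x \<delta> \<subseteq> Rb (inflate F eps) (-t) y \<and>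
                  Rb (inflate F eps) (-t) y = Rb (inflate (reverse F) eps) t y"
    proof
      fix y assume y: "y \<in> Rb F t x - {x}"
      then obtain I \<phi> s where h: "y = \<phi> s" "(I, \<phi>) \<in> max_sols F x" "s \<in> I \<inter> {0..t}"
          "\<not> (\<exists>s'\<in>{0..t} \<inter> I. s' > s)"
        unfolding Rb_def using t by auto
      have mx: "is_maximal_solution F I \<phi>" "\<phi> 0 = x" using h(2) unfolding max_sols_def by auto
      have sol: "is_solution F I \<phi>" using mx(1) unfolding is_maximal_solution_def by blast
      have unb: "\<not> bdd_above I" using assms(3) h(2) unfolding forward_complete_def by blast
      have I0: "{0..} \<subseteq> I"
      proof
        fix r :: real assume r: "r \<in> {0..}"
        obtain i where i: "i \<in> I" "r < i" using unb unfolding bdd_above_def by (meson not_le)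
        have "0 \<in> I" "is_interval I" using sol unfolding is_solution_def by auto
        then show "r \<in> I" using i r unfolding is_interval_1 by (meson atLeast_iff less_imp_le)
      qed
      have tI: "t \<in> I" using I0 t by auto
      have st: "s = t"
      proof (rule ccontr)
        assume "s \<noteq> t"
        then have "s < t" using h(3) by auto
        then show False using h(4) tI t by auto
      qed
      have yt: "y = \<phi> t" using h(1) st by simp
      have TI: "{0..T} \<subseteq> I" using I0 by auto
      have bdK: "\<And>p v. p \<in> cball x 1 \<Longrightarrow> v \<in> F p \<Longrightarrow> norm v \<le> M" using M(2) unfolding K_def by blast
      have esc: "\<forall>r\<in>{0..T}. norm (\<phi> r - x) \<le> M * r"
        using escape[OF sol mx(2) TI _ bdK] M(1) T by auto
      have near: "norm (\<phi> r - x) \<le> 1/2" if "r \<in> {0..t}" for r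
      proof -
        have "norm (\<phi> r - x) \<le> M * r" using esc that t by auto
        also have "\<dots> \<le> M * T" using that t M(1) by (intro mult_left_mono) auto
        finally show ?thesis using T(2) by simp
      qed
      have sub0t: "{0..t} \<subseteq> I" using I0 by auto
      have cond: "\<exists>u\<in>F (\<phi> r + d). norm (v + w' - u) \<le> eps (\<phi> r + d)"
        if r: "r \<in> {0..t}" and v: "v \<in> F (\<phi> r)" and d: "norm d \<le> \<delta>" and w': "norm w' \<le> \<delta> / t"
        for r v d w'
      proof -
        have pK: "\<phi> r \<in> K" using near[OF r] unfolding K_def by (simp add: dist_norm norm_minus_commute)
        have "dist (\<phi> r) (\<phi> r + d) < \<rho>" using d \<delta>(2) by (simp add: dist_norm)
        then obtain u where u: "u \<in> F (\<phi> r + d)" "dist v u < m/2" using \<rho>(2)[OF pK _ v] by blast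
        have qK: "\<phi> r + d \<in> K"
        proof -
          have "norm (\<phi> r + d - x) \<le> norm (\<phi> r - x) + norm d"
            by (metis add_diff_eq diff_add_eq norm_triangle_ineq add.commute)
          also have "\<dots> \<le> 1" using near[OF r] d \<delta>(4) by simp
          finally show ?thesis unfolding K_def by (simp add: dist_norm norm_minus_commute)
        qed
        have "norm (v + w' - u) \<le> norm (v - u) + norm w'"
          by (metis add.commute add_diff_eq diff_add_eq norm_triangle_ineq)
        also have "\<dots> \<le> m/2 + m/2"
        proof -
          have a: "norm (v - u) < m/2" using u(2) by (simp add: dist_norm)
          have b: "norm w' \<le> m/2" using w' \<delta>t by linarith
          show ?thesis using a b by linarith
        qed
        also have "\<dots> \<le> eps (\<phi> r + d)" using m(2)[OF qK] by simp
        finally show ?thesis using u(1) by blast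
      qed
      have fwd: "cball y \<delta> \<subseteq> Rb (inflate F eps) t x"
      proof
        fix z assume z: "z \<in> cball y \<delta>"
        define w where "w = (1/t) *\<^sub>R (z - y)"
        have nw: "norm w \<le> \<delta> / t" using z t unfolding w_def by (simp add: dist_norm divide_simps norm_minus_commute)
        have psol: "is_solution (inflate F eps) {0-0..t-0} (\<lambda>r. \<phi> (r + 0) + r *\<^sub>R w)"
        proof (rule pert_solution[OF sol sub0t])
          show "0 - 0 \<le> (0::real)" "0 \<le> t - 0" using t by auto
          fix r v assume r: "r \<in> {0..t}" and v: "v \<in> F (\<phi> r)"
          have "norm ((r - 0) *\<^sub>R w) \<le> \<delta>"
          proof -
            have "norm ((r - 0) *\<^sub>R w) = r * norm w" using r by simp
            also have "\<dots> \<le> t * (\<delta> / t)" using r nw by (intro mult_mono) auto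
            also have "\<dots> = \<delta>" using t by simp
            finally show ?thesis .
          qed
          then show "\<exists>u\<in>F (\<phi> r + (r - 0) *\<^sub>R w). norm (v + w - u) \<le> eps (\<phi> r + (r - 0) *\<^sub>R w)"
            using cond[OF r v _ nw] by blast
        qed
        obtain I' \<psi> where I': "is_maximal_solution (inflate F eps) I' \<psi>" "{0-0..t-0} \<subseteq> I'"
          "\<forall>s\<in>{0-0..t-0}. \<psi> s = \<phi> (s + 0) + s *\<^sub>R w"
          using extend_maximal[OF psol] by blast
        have \<psi>0: "\<psi> 0 = x" using I'(3) mx(2) t by auto
        have \<psi>t: "\<psi> t = z"
        proof -
          have "\<psi> t = \<phi> t + t *\<^sub>R w" using I'(3) t by auto
          also have "\<dots> = z" unfolding w_def using yt t by simp
          finally show ?thesis .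
        qed
        have "(I', \<psi>) \<in> max_sols (inflate F eps) x" unfolding max_sols_def using I'(1) \<psi>0 by simp
        moreover have "t \<in> I' \<inter> {0..t}" using I'(2) t by auto
        moreover have "\<not> (\<exists>s'\<in>{0..t} \<inter> I'. s' > t)" by auto
        ultimately have "\<exists>I'' \<psi>' s'. z = \<psi>' s' \<and> (I'', \<psi>') \<in> max_sols (inflate F eps) x \<and> s' \<in> I'' \<inter> {0..t} \<and> \<not> (\<exists>s''\<in>{0..t} \<inter> I''. s'' > s')"
          using \<psi>t by blast
        then show "z \<in> Rb (inflate F eps) t x" unfolding Rb_def using t by simp
      qed
      have bwd: "cball x \<delta> \<subseteq> Rb (inflate F eps) (-t) y"
      proof
        fix z assume z: "z \<in> cball x \<delta>"
        define w where "w = - ((1/t) *\<^sub>R (z - x))"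
        have nw: "norm w \<le> \<delta> / t" using z t unfolding w_def by (simp add: dist_norm divide_simps norm_minus_commute)
        have psol: "is_solution (inflate F eps) {0-t..t-t} (\<lambda>r. \<phi> (r + t) + r *\<^sub>R w)"
        proof (rule pert_solution[OF sol sub0t])
          show "0 - t \<le> (0::real)" "0 \<le> t - t" using t by auto
          fix r v assume r: "r \<in> {0..t}" and v: "v \<in> F (\<phi> r)"
          have "norm ((r - t) *\<^sub>R w) \<le> \<delta>"
          proof -
            have "norm ((r - t) *\<^sub>R w) = (t - r) * norm w" using r by simp
            also have "\<dots> \<le> t * (\<delta> / t)" using r nw t by (intro mult_mono) auto
            also have "\<dots> = \<delta>" using t by simp
            finally show ?thesis .
          qed
          then show "\<exists>u\<in>F (\<phi> r + (r - t) *\<^sub>R w). norm (v + w - u) \<le> eps (\<phi> r + (r - t) *\<^sub>R w)"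
            using cond[OF r v _ nw] by blast
        qed
        obtain I' \<psi> where I': "is_maximal_solution (inflate F eps) I' \<psi>" "{0-t..t-t} \<subseteq> I'"
          "\<forall>s\<in>{0-t..t-t}. \<psi> s = \<phi> (s + t) + s *\<^sub>R w"
          using extend_maximal[OF psol] by blast
        have \<psi>0: "\<psi> 0 = y" using I'(3) yt t by auto
        have \<psi>t: "\<psi> (-t) = z"
        proof -
          have "\<psi> (-t) = \<phi> 0 + (-t) *\<^sub>R w" using I'(3) t by auto
          also have "\<dots> = z" unfolding w_def using mx(2) t by simp
          finally show ?thesis .
        qed
        have "(I', \<psi>) \<in> max_sols (inflate F eps) y" unfolding max_sols_def using I'(1) \<psi>0 by simp
        moreover have "-t \<in> I' \<inter> {-t..0}" using I'(2) t by auto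
        moreover have "\<not> (\<exists>s'\<in>{-t..0} \<inter> I'. s' < -t)" by auto
        ultimately have "\<exists>I'' \<psi>' s'. z = \<psi>' s' \<and> (I'', \<psi>') \<in> max_sols (inflate F eps) y \<and> s' \<in> I'' \<inter> {-t..0} \<and> \<not> (\<exists>s''\<in>{-t..0} \<inter> I''. s'' < s')"
          using \<psi>t by blast
        then show "z \<in> Rb (inflate F eps) (-t) y" unfolding Rb_def using t by simp
      qed
      have eq: "Rb (inflate F eps) (-t) y = Rb (inflate (reverse F) eps) t y"
        unfolding inflate_reverse using Rb_rev t by blast
      show "cball y \<delta> \<subseteq> Rb (inflate F eps) t x \<and>
                  cball x \<delta> \<subseteq> Rb (inflate F eps) (-t) y \<and>
                  Rb (inflate F eps) (-t) y = Rb (inflate (reverse F) eps) t y"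
        using fwd bwd eq by blast
    qed
    then show "\<exists>\<delta>>0. \<forall>y \<in> Rb F t x - {x}.
                  cball y \<delta> \<subseteq> Rb (inflate F eps) t x \<and>
                  cball x \<delta> \<subseteq> Rb (inflate F eps) (-t) y \<and>
                  Rb (inflate F eps) (-t) y = Rb (inflate (reverse F) eps) t y"
      using \<delta>(1) by blast
  qed
  then show "\<exists>T>0. \<forall>t. 0 < t \<and> t \<le> T \<longrightarrow>
              (\<exists>\<delta>>0. \<forall>y \<in> Rb F t x - {x}.
                  cball y \<delta> \<subseteq> Rb (inflate F eps) t x \<and>
                  cball x \<delta> \<subseteq> Rb (inflate F eps) (-t) y \<and>
                  Rb (inflate F eps) (-t) y = Rb (inflate (reverse F) eps) t y)"
    using T(1) by blast
qed

end
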